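(* Let $1<p<\infty$ and let $w$ be an $A_p$ weight. Then there exist $A_1$ weights $w_1,w_2$ such that $w=w_1w_2^{1-p}$, $[w_1]_{A_1}\le C_p[w]_{A_p}$ and $[w_2]_{A_1}\le C_p[w]_{A_p}^{1/(p-1)}$, where $C_p$ is a constant depending only on $p$.
   Context: Let $(X,\mathcal{F},\mu)$ be a measure space with a filtration $(\mathcal{F}_n)_{n\ge0}$ (nondecreasing sub-$\sigma$-fields) such that $\sigma(\bigcup_n\mathcal{F}_n)=\mathcal{F}$ and $(X,\mathcal{F}_0,\mu)$ is $\sigma$-finite. A weight is a positive function in $L_1(X)+L_\infty(X)$. For $1<p<\infty$, $[w]_{A_p}=\sup_{n\ge0}\|\mathbb{E}(w|\mathcal{F}_n)\mathbb{E}(w^{1/(1-p)}|\mathcal{F}_n)^{p-1}\|_{L_\infty(X)}$, and $[w]_{A_1}=\sup_{n\ge0}\|\mathbb{E}(w|\mathcal{F}_n)/w\|_{L_\infty(X)}$; $w$ is an $A_p$ (resp. $A_1$) weight if the corresponding characteristic is finite. *)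

theory Defs
  imports "HOL-Probability.Probability"
begin

definition mfiltration :: "'a measure \<Rightarrow> (nat \<Rightarrow> 'a measure) \<Rightarrow> bool" where
  "mfiltration M F \<longleftrightarrow>
     (\<forall>n. subalgebra M (F n)) \<and>
     (\<forall>n m. n \<le> m \<longrightarrow> sets (F n) \<subseteq> sets (F m)) \<and>
     sets M = sigma_sets (space M) (\<Union>n. sets (F n)) \<and>
     sigma_finite_subalgebra M (F 0)"

definition ennpow :: "ennreal \<Rightarrow> real \<Rightarrow> ennreal" where
  "ennpow x a = (if x = \<infinity> then \<infinity> else ennreal (enn2real x powr a))"

definition in_L1_plus_Linf :: "'a measure \<Rightarrow> ('a \<Rightarrow> real) \<Rightarrow> bool" where
  "in_L1_plus_Linf M w \<longleftrightarrow>
     (\<exists>g h. integrable M g \<and> h \<in> borel_measurable M \<and>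
            esssup M (\<lambda>x. ennreal \<bar>h x\<bar>) < \<infinity> \<and>
            (AE x in M. w x = g x + h x))"

definition is_weight :: "'a measure \<Rightarrow> ('a \<Rightarrow> real) \<Rightarrow> bool" where
  "is_weight M w \<longleftrightarrow> w \<in> borel_measurable M \<and> (\<forall>x\<in>space M. 0 < w x) \<and> in_L1_plus_Linf M w"

definition Ap_char :: "'a measure \<Rightarrow> (nat \<Rightarrow> 'a measure) \<Rightarrow> real \<Rightarrow> ('a \<Rightarrow> real) \<Rightarrow> ennreal" where
  "Ap_char M F p w = (SUP n. esssup M (\<lambda>x.
      nn_cond_exp M (F n) (\<lambda>y. ennreal (w y)) x *
      ennpow (nn_cond_exp M (F n) (\<lambda>y. ennreal (w y powr (1 / (1 - p)))) x) (p - 1)))"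

definition A1_char :: "'a measure \<Rightarrow> (nat \<Rightarrow> 'a measure) \<Rightarrow> ('a \<Rightarrow> real) \<Rightarrow> ennreal" where
  "A1_char M F w = (SUP n. esssup M (\<lambda>x. nn_cond_exp M (F n) (\<lambda>y. ennreal (w y)) x / ennreal (w x)))"

end

theory Submission
  imports Defs
begin


lemma ennpow_ennreal: "0 \<le> r \<Longrightarrow> ennpow (ennreal r) a = ennreal (r powr a)"
  by (simp add: ennpow_def)

lemma ennpow_top[simp]: "ennpow \<top> a = \<top>"
  by (simp add: ennpow_def)

lemma ennpow_zero[simp]: "ennpow 0 a = 0"
  by (simp add: ennpow_def)

lemma ennpow_one[simp]: "ennpow x 1 = x"
  by (cases x) (auto simp: ennpow_def)

lemma ennpow_eq_top_iff[simp]: "ennpow x a = \<top> \<longleftrightarrow> x = \<top>"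
  by (auto simp: ennpow_def)

lemma ennpow_less_top_iff[simp]: "ennpow x a < \<top> \<longleftrightarrow> x < \<top>"
  using ennpow_eq_top_iff top.not_eq_extremum by blast

lemma ennpow_eq_0_iff[simp]: "ennpow x a = 0 \<longleftrightarrow> x = 0"
  by (cases x) (auto simp: ennpow_def)

lemma ennpow_pos_iff[simp]: "0 < ennpow x a \<longleftrightarrow> 0 < x"
  by (metis ennpow_eq_0_iff not_gr_zero)

lemma ennpow_mult: assumes "0 < a" shows "ennpow (x * y) a = ennpow x a * ennpow y a"
proof (cases "x = \<top> \<or> y = \<top>")
  case True
  then show ?thesis
    by (cases "x = 0"; cases "y = 0") (auto simp: ennreal_mult_top ennreal_top_mult)
next
  case False
  then obtain r s where "x = ennreal r" "y = ennreal s" "0 \<le> r" "0 \<le> s"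
    by (metis ennreal_cases top.not_eq_extremum)
  then show ?thesis
    by (simp add: ennpow_ennreal powr_mult ennreal_mult[symmetric])
qed

lemma ennpow_ennpow: assumes "0 < a" "0 < b" shows "ennpow (ennpow x a) b = ennpow x (a * b)"
proof (cases "x = \<top>")
  case False
  then obtain r where "x = ennreal r" "0 \<le> r" by (metis ennreal_cases)
  then show ?thesis by (simp add: ennpow_ennreal powr_powr)
qed simp

lemma ennpow_mono: assumes "0 \<le> a" "x \<le> y" shows "ennpow x a \<le> ennpow y a"
proof (cases "y = \<top>")
  case False
  then have "x \<noteq> \<top>" using assms top.extremum_unique by blast
  with False obtain r s where "x = ennreal r" "y = ennreal s" "0 \<le> r" "0 \<le> s"
    by (metis ennreal_cases)
  with assms show ?thesis by (auto simp: ennpow_ennreal intro!: ennreal_leI powr_mono2)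
qed simp

lemma ennpow_inv: assumes "0 < a" shows "ennpow (ennpow x a) (1/a) = x"
  using ennpow_ennpow[of a "1/a" x] assms by simp

lemma ennpow_le_iff: assumes "0 < a" shows "ennpow x a \<le> ennpow y a \<longleftrightarrow> x \<le> y"
  by (metis assms ennpow_inv ennpow_mono less_eq_real_def zero_less_divide_1_iff)

lemma ennpow_less_iff: assumes "0 < a" shows "ennpow x a < ennpow y a \<longleftrightarrow> x < y"
  by (meson assms ennpow_le_iff not_le)

lemma ennpow_add: assumes "0 < a" "0 < b" shows "ennpow x (a + b) = ennpow x a * ennpow x b"
proof (cases "x = \<top>")
  case False
  then obtain r where "x = ennreal r" "0 \<le> r" by (metis ennreal_cases)
  then show ?thesis
    by (cases "r = 0") (simp_all add: ennpow_ennreal powr_add ennreal_mult[symmetric])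
next
  case True then show ?thesis by simp
qed

lemma ennpow_inverse: assumes "0 < a" shows "ennpow (inverse x) a = inverse (ennpow x a)"
proof (cases "x = \<top>")
  case False
  then obtain r where r: "x = ennreal r" "0 \<le> r" by (metis ennreal_cases)
  show ?thesis
  proof (cases "r = 0")
    case True then show ?thesis using r by simp
  next
    case False
    then show ?thesis using r
      by (simp add: inverse_ennreal ennpow_ennreal inverse_eq_divide powr_divide)
  qed
qed simp

lemma borel_measurable_ennpow[measurable]:
  assumes [measurable]: "f \<in> borel_measurable M"
  shows "(\<lambda>x. ennpow (f x) a) \<in> borel_measurable M"
  unfolding ennpow_def by measurable

lemma ennpow_le_1_plus: assumes "1 \<le> r" shows "y \<le> 1 + ennpow y r"
proof (cases "y \<le> 1")
  case True then show ?thesis by (metis add_increasing2 zero_le)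
next
  case False
  then have "ennpow y 1 \<le> ennpow y r"
  proof (cases "y = \<top>")
    case False
    then obtain s where s: "y = ennreal s" "0 \<le> s" by (metis ennreal_cases)
    with \<open>\<not> y \<le> 1\<close> have "1 < s" by (metis ennreal_le_1 not_le)
    then have "s powr 1 \<le> s powr r" using assms by (intro powr_mono) auto
    then show ?thesis using s \<open>1 < s\<close> by (simp add: ennpow_ennreal ennreal_leI)
  qed simp
  then show ?thesis by (simp add: add_increasing)
qed

lemma ennpow_sum_le: assumes "0 < r"
  shows "ennpow (x + y) r \<le> ennreal (2 powr r) * (ennpow x r + ennpow y r)"
proof -
  have "x + y \<le> 2 * max x y"
    by (metis add_mono max.cobounded1 max.cobounded2 mult_2)
  then have "ennpow (x + y) r \<le> ennpow (2 * max x y) r"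
    using assms by (intro ennpow_mono) auto
  also have "\<dots> = ennreal (2 powr r) * ennpow (max x y) r"
    using assms by (simp add: ennpow_mult ennpow_ennreal[of 2, simplified])
  also have "ennpow (max x y) r \<le> ennpow x r + ennpow y r"
    by (cases "x \<le> y") (auto simp: max_def add_increasing)
  finally show ?thesis by (simp add: mult_left_mono)
qed


locale filt =
  fixes M :: "'a measure" and F :: "nat \<Rightarrow> 'a measure"
  assumes mf: "mfiltration M F"
begin

abbreviation E where "E n f \<equiv> nn_cond_exp M (F n) f"

lemma subalg: "subalgebra M (F n)"
  using mf by (auto simp: mfiltration_def)

lemma sets_mono: "n \<le> m \<Longrightarrow> sets (F n) \<subseteq> sets (F m)"
  using mf by (auto simp: mfiltration_def)

lemma space_F[simp]: "space (F n) = space M"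
  using subalg by (auto simp: subalgebra_def)

lemma subalg_nm: "n \<le> m \<Longrightarrow> subalgebra (F m) (F n)"
  using sets_mono by (auto simp: subalgebra_def)

lemma sfs: "sigma_finite_subalgebra M (F n)"
proof -
  interpret S0: sigma_finite_subalgebra M "F 0" using mf by (auto simp: mfiltration_def)
  show ?thesis by (rule S0.nested_subalg_is_sigma_finite[OF subalg subalg_nm]) simp
qed

lemma sfm: "sigma_finite_measure M"
  using sfs[of 0] by (rule sigma_finite_subalgebra_is_sigma_finite)

lemma meas_mono: "f \<in> borel_measurable (F k) \<Longrightarrow> k \<le> n \<Longrightarrow> f \<in> borel_measurable (F n)"
  using measurable_from_subalg[OF subalg_nm] by blast

lemma meas_M: "f \<in> borel_measurable (F n) \<Longrightarrow> f \<in> borel_measurable M"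
  using measurable_from_subalg[OF subalg] by blast

lemma sets_M: "A \<in> sets (F n) \<Longrightarrow> A \<in> sets M"
  using subalg by (auto simp: subalgebra_def)

lemma E_meas[measurable]: "E n f \<in> borel_measurable (F n)" "E n f \<in> borel_measurable M"
  by simp_all

lemma E_intg:
  assumes "f \<in> borel_measurable (F n)" "g \<in> borel_measurable M"
  shows "(\<integral>\<^sup>+ x. f x * E n g x \<partial>M) = (\<integral>\<^sup>+ x. f x * g x \<partial>M)"
proof -
  interpret S: sigma_finite_subalgebra M "F n" by (rule sfs)
  show ?thesis using assms by (rule S.nn_cond_exp_intg)
qed

lemma E_prod:
  assumes "f \<in> borel_measurable (F n)" "g \<in> borel_measurable M"
  shows "AE x in M. f x * E n g x = E n (\<lambda>x. f x * g x) x"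
proof -
  interpret S: sigma_finite_subalgebra M "F n" by (rule sfs)
  show ?thesis using assms by (rule S.nn_cond_exp_prod)
qed

lemma E_sum:
  assumes "f \<in> borel_measurable M" "g \<in> borel_measurable M"
  shows "AE x in M. E n f x + E n g x = E n (\<lambda>x. f x + g x) x"
proof -
  interpret S: sigma_finite_subalgebra M "F n" by (rule sfs)
  show ?thesis using assms by (rule S.nn_cond_exp_sum)
qed

lemma E_cong:
  assumes "AE x in M. f x = g x" "f \<in> borel_measurable M" "g \<in> borel_measurable M"
  shows "AE x in M. E n f x = E n g x"
proof -
  interpret S: sigma_finite_subalgebra M "F n" by (rule sfs)
  show ?thesis using assms by (rule S.nn_cond_exp_cong)
qed

lemma E_mono:
  assumes "AE x in M. f x \<le> g x" "f \<in> borel_measurable M" "g \<in> borel_measurable M"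
  shows "AE x in M. E n f x \<le> E n g x"
proof -
  interpret S: sigma_finite_subalgebra M "F n" by (rule sfs)
  show ?thesis using assms by (rule S.nn_cond_exp_mono)
qed

lemma E_Fmeas:
  assumes "f \<in> borel_measurable (F n)"
  shows "AE x in M. f x = E n f x"
proof -
  interpret S: sigma_finite_subalgebra M "F n" by (rule sfs)
  show ?thesis using assms by (rule S.nn_cond_exp_F_meas)
qed

lemma E_cmult:
  assumes "g \<in> borel_measurable M"
  shows "AE x in M. E n (\<lambda>y. c * g y) x = c * E n g x"
  using E_prod[of "\<lambda>_. c" n g] assms by auto

lemma E_pos:
  assumes [measurable]: "g \<in> borel_measurable M" and pos: "\<And>x. x \<in> space M \<Longrightarrow> 0 < g x"
  shows "AE x in M. 0 < E n g x"
proof -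
  define A where "A = {x \<in> space (F n). E n g x = 0}"
  have A[measurable]: "A \<in> sets (F n)" unfolding A_def by measurable
  have "(\<integral>\<^sup>+ x. indicator A x * g x \<partial>M) = (\<integral>\<^sup>+ x. indicator A x * E n g x \<partial>M)"
    by (rule E_intg[symmetric]) auto
  also have "\<dots> = (\<integral>\<^sup>+ x. 0 \<partial>M)"
    by (rule nn_integral_cong) (auto simp: A_def indicator_def)
  finally have "(\<integral>\<^sup>+ x. indicator A x * g x \<partial>M) = 0" by simp
  then have "AE x in M. indicator A x * g x = 0"
    using sets_M[OF A] by (subst nn_integral_0_iff_AE[symmetric]) auto
  with AE_space show ?thesis
  proof eventually_elim
    case (elim x)
    then show ?case using pos[of x] by (auto simp: A_def indicator_def zero_less_iff_neq_zero split: if_splits)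
  qed
qed

lemma E_suminf:
  assumes [measurable]: "\<And>k. f k \<in> borel_measurable M"
  shows "AE x in M. E n (\<lambda>y. \<Sum>k. f k y) x = (\<Sum>k. E n (f k) x)"
proof -
  interpret S: sigma_finite_subalgebra M "F n" by (rule sfs)
  have "AE x in M. (\<Sum>k. E n (f k) x) = E n (\<lambda>y. \<Sum>k. f k y) x"
  proof (rule S.nn_cond_exp_charact)
    fix A assume A[measurable]: "A \<in> sets (F n)"
    then have [measurable]: "A \<in> sets M" by (rule sets_M)
    have "(\<integral>\<^sup>+ x \<in> A. (\<Sum>k. f k x) \<partial>M) = (\<integral>\<^sup>+ x. (\<Sum>k. indicator A x * f k x) \<partial>M)"
      by (auto intro!: nn_integral_cong simp: ennreal_suminf_multc mult.commute)
    also have "\<dots> = (\<Sum>k. \<integral>\<^sup>+ x. indicator A x * f k x \<partial>M)"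
      by (rule nn_integral_suminf) measurable
    also have "\<dots> = (\<Sum>k. \<integral>\<^sup>+ x. indicator A x * E n (f k) x \<partial>M)"
      by (rule suminf_cong, rule E_intg[symmetric]) auto
    also have "\<dots> = (\<integral>\<^sup>+ x. (\<Sum>k. indicator A x * E n (f k) x) \<partial>M)"
      by (rule nn_integral_suminf[symmetric]) measurable
    also have "\<dots> = (\<integral>\<^sup>+ x \<in> A. (\<Sum>k. E n (f k) x) \<partial>M)"
      by (auto intro!: nn_integral_cong simp: ennreal_suminf_multc mult.commute)
    finally show "(\<integral>\<^sup>+ x \<in> A. (\<Sum>k. f k x) \<partial>M) = (\<integral>\<^sup>+ x \<in> A. (\<Sum>k. E n (f k) x) \<partial>M)" .
  qed measurable
  then show ?thesis by (auto elim: AE_mp)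
qed

end


lemma powr_nn_integral:
  assumes "b > -1" "c \<ge> 0"
  shows "(\<integral>\<^sup>+t. ennreal (t powr b) * indicator {0..c} t \<partial>lborel) = ennreal (c powr (b+1) / (b+1))"
proof -
  have "((\<lambda>t. t powr b) has_integral c powr (b+1) / (b+1)) {0..c}"
    by (rule has_integral_powr_from_0) (use assms in auto)
  moreover have eq: "(\<lambda>t. t powr b * indicator {0..c} t) = (\<lambda>t. if t \<in> {0..c} then t powr b else 0)"
    by (auto simp: indicator_def)
  ultimately have "((\<lambda>t. t powr b * indicator {0..c} t) has_integral c powr (b+1) / (b+1)) UNIV"
    unfolding eq has_integral_restrict_UNIV by simp
  then have "integral\<^sup>N lborel (\<lambda>t. t powr b * indicator {0..c} t) = c powr (b+1) / (b+1)"
    by (intro nn_integral_has_integral_lborel) auto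
  moreover have "(\<integral>\<^sup>+t. ennreal (t powr b) * indicator {0..c} t \<partial>lborel) =
      (\<integral>\<^sup>+t. ennreal (t powr b * indicator {0..c} t) \<partial>lborel)"
    by (intro nn_integral_cong) (auto simp: indicator_def)
  ultimately show ?thesis by simp
qed

definition lay :: "real \<Rightarrow> ennreal \<Rightarrow> ennreal" where
  "lay b y = (\<integral>\<^sup>+t. ennreal (t powr b) * indicator {t. 0 \<le> t \<and> ennreal t < y} t \<partial>lborel)"

lemma lay_finite:
  assumes "b > -1" "0 \<le> r"
  shows "lay b (ennreal r) = ennreal (r powr (b+1) / (b+1))"
proof -
  have "lay b (ennreal r) = (\<integral>\<^sup>+t. ennreal (t powr b) * indicator {0..r} t \<partial>lborel)"
    unfolding lay_def
  proof (rule nn_integral_cong_AE)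
    have "AE t in lborel. t \<noteq> r" by (rule AE_lborel_singleton)
    then show "AE t in lborel. ennreal (t powr b) * indicator {t. 0 \<le> t \<and> ennreal t < ennreal r} t =
        ennreal (t powr b) * indicator {0..r} t"
      by eventually_elim (use assms in \<open>auto simp: indicator_def ennreal_less_iff\<close>)
  qed
  also have "\<dots> = ennreal (r powr (b+1) / (b+1))"
    using assms by (rule powr_nn_integral)
  finally show ?thesis .
qed

lemma lay_mono: "y \<le> z \<Longrightarrow> lay b y \<le> lay b z"
  unfolding lay_def
  by (intro nn_integral_mono) (auto simp: indicator_def intro: order.strict_trans2 mult_left_mono)

lemma lay_top:
  assumes "b \<ge> 0"
  shows "lay b \<top> = \<top>"
proof (rule ccontr)
  assume "lay b \<top> \<noteq> \<top>"
  then obtain R where R: "lay b \<top> = ennreal R" "0 \<le> R" by (metis ennreal_cases)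
  define r where "r = (R + 1) * (b + 1) + 1"
  have r1: "1 \<le> r" using R assms by (simp add: r_def)
  have "r powr 1 \<le> r powr (b+1)" using r1 assms by (intro powr_mono) auto
  then have "r \<le> r powr (b+1)" using r1 by simp
  then have "r / (b+1) \<le> r powr (b+1) / (b+1)" using assms by (simp add: divide_right_mono)
  moreover have "R < r / (b+1)" using assms R by (simp add: r_def field_simps)
  ultimately have "R < r powr (b+1) / (b+1)" by linarith
  moreover have "lay b (ennreal r) \<le> lay b \<top>" by (rule lay_mono) simp
  ultimately show False using R r1 assms by (simp add: lay_finite)
qed

lemma ennpow_lay:
  assumes "q \<ge> 1"
  shows "ennpow y q = ennreal q * lay (q - 1) y"
proof (cases "y = \<top>")
  case True then show ?thesis using assms by (simp add: lay_top ennreal_mult_top)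
next
  case False
  then obtain r where r: "y = ennreal r" "0 \<le> r" by (metis ennreal_cases)
  then show ?thesis using assms by (simp add: lay_finite ennpow_ennreal ennreal_mult[symmetric])
qed


lemma ennreal_weak_aux:
  fixes a a1 b :: ennreal
  assumes "ennreal l < a / b" "a \<le> a1 + ennreal (l/2) * b" "0 < l"
  shows "ennreal (l/2) * b \<le> a1"
proof (cases "b = \<top>")
  case True then show ?thesis using assms(1) by (simp add: ennreal_divide_top)
next
  case False
  show ?thesis
  proof (cases "b = 0")
    case True then show ?thesis by simp
  next
    case b0: False
    have "ennreal l * b < (a / b) * b"
      using assms(1) b0 False by (intro ennreal_mult_strict_right_mono) (auto simp: top.not_eq_extremum zero_less_iff_neq_zero)
    also have "(a / b) * b = a"
    proof -
      have "b / b = 1" using b0 False by (simp add: ennreal_divide_self top.not_eq_extremum)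
      then show ?thesis by (metis ennreal_times_divide mult.commute mult_1_right)
    qed
    finally have lt: "ennreal l * b < a" .
    have "ennreal l * b = ennreal (l/2) * b + ennreal (l/2) * b"
      using assms(3) by (simp add: distrib_right[symmetric] ennreal_plus[symmetric] del: ennreal_plus)
    show ?thesis
    proof (rule ccontr)
      assume "\<not> ?thesis"
      then have "a1 \<le> ennreal (l/2) * b" by (simp add: not_le less_imp_le)
      then have h: "a1 + ennreal (l/2) * b \<le> ennreal (l/2) * b + ennreal (l/2) * b" by (rule add_right_mono)
      from lt \<open>ennreal l * b = _\<close> have "ennreal (l/2) * b + ennreal (l/2) * b < a" by simp
      with h assms(2) show False by (meson leD order_trans)
    qed
  qed
qed

context filt begin

lemma weak_type:
  fixes v :: "'a \<Rightarrow> real" and g :: "'a \<Rightarrow> ennreal"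
  assumes [measurable]: "v \<in> borel_measurable M" "g \<in> borel_measurable M"
    and vpos: "\<And>x. x \<in> space M \<Longrightarrow> 0 < v x" and l: "0 < l"
  defines "Gn \<equiv> \<lambda>n x. E n (\<lambda>y. g y * ennreal (v y)) x / E n (\<lambda>y. ennreal (v y)) x"
  shows "ennreal (l/2) * (\<integral>\<^sup>+x. indicator {x\<in>space M. ennreal l < (SUP n. Gn n x)} x * ennreal (v x) \<partial>M)
      \<le> (\<integral>\<^sup>+x. indicator {x\<in>space M. ennreal (l/2) < g x} x * g x * ennreal (v x) \<partial>M)"
proof -
  define g1 where "g1 = (\<lambda>y. if ennreal (l/2) < g y then g y else 0)"
  have [measurable]: "g1 \<in> borel_measurable M" unfolding g1_def by measurable
  have Gn_measF: "Gn k \<in> borel_measurable (F k)" for k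
    unfolding Gn_def by measurable
  have Gn_meas: "Gn k \<in> borel_measurable (F n)" if "k \<le> n" for k n
    using meas_mono[OF Gn_measF that] .
  have Gn_measM[measurable]: "Gn k \<in> borel_measurable M" for k
    unfolding Gn_def by measurable
  have step1: "AE x in M. E n (\<lambda>y. g y * ennreal (v y)) x \<le>
        E n (\<lambda>y. g1 y * ennreal (v y)) x + ennreal (l/2) * E n (\<lambda>y. ennreal (v y)) x" for n
  proof -
    have "AE x in M. E n (\<lambda>y. g y * ennreal (v y)) x \<le>
        E n (\<lambda>y. g1 y * ennreal (v y) + ennreal (l/2) * ennreal (v y)) x"
    proof (rule E_mono)
      show "AE x in M. g x * ennreal (v x) \<le> g1 x * ennreal (v x) + ennreal (l/2) * ennreal (v x)"
      proof (rule AE_I2)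
        fix x assume x: "x \<in> space M"
        show "g x * ennreal (v x) \<le> g1 x * ennreal (v x) + ennreal (l/2) * ennreal (v x)"
        proof (cases "ennreal (l/2) < g x")
          case True then show ?thesis using x by (simp add: g1_def add_increasing2)
        next
          case False then show ?thesis using x
            by (simp add: g1_def not_less mult_right_mono add_increasing)
        qed
      qed
    qed measurable
    moreover have "AE x in M. E n (\<lambda>y. g1 y * ennreal (v y)) x + E n (\<lambda>y. ennreal (l/2) * ennreal (v y)) x
        = E n (\<lambda>y. g1 y * ennreal (v y) + ennreal (l/2) * ennreal (v y)) x"
      by (rule E_sum) measurable
    moreover have "AE x in M. E n (\<lambda>y. ennreal (l/2) * ennreal (v y)) x = ennreal (l/2) * E n (\<lambda>y. ennreal (v y)) x"
      by (rule E_cmult) measurable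
    ultimately show ?thesis by eventually_elim simp
  qed
  define A where "A = (\<lambda>n. {x\<in>space M. ennreal l < Gn n x \<and> (\<forall>k<n. Gn k x \<le> ennreal l)})"
  have A_F: "A n \<in> sets (F n)" for n
  proof -
    have "A n = {x\<in>space (F n). ennreal l < Gn n x} \<inter> (\<Inter>k\<in>{..n}. {x\<in>space (F n). k < n \<longrightarrow> Gn k x \<le> ennreal l})
        \<inter> space (F n)"
      by (auto simp: A_def)
    also have "\<dots> \<in> sets (F n)"
    proof (intro sets.Int sets.finite_INT sets.top)
      show "{x\<in>space (F n). ennreal l < Gn n x} \<in> sets (F n)"
        using Gn_meas[of n n] by measurable
      fix k assume "k \<in> {..n}"
      then have [measurable]: "Gn k \<in> borel_measurable (F n)" by (intro Gn_meas) auto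
      show "{x\<in>space (F n). k < n \<longrightarrow> Gn k x \<le> ennreal l} \<in> sets (F n)"
        by measurable
    qed auto
    finally show ?thesis .
  qed
  have A_M[measurable]: "A n \<in> sets M" for n using A_F by (rule sets_M)
  have disj: "disjoint_family A"
    unfolding disjoint_family_on_def A_def
    by (auto, metis linorder_neqE_nat not_le)
  have UA: "(\<Union>n. A n) = {x\<in>space M. ennreal l < (SUP n. Gn n x)}"
  proof safe
    fix x assume x: "x \<in> space M" "ennreal l < (SUP n. Gn n x)"
    then obtain n where "ennreal l < Gn n x" by (auto simp: less_SUP_iff)
    define m where "m = (LEAST m. ennreal l < Gn m x)"
    have m: "ennreal l < Gn m x" unfolding m_def by (rule LeastI) fact
    have "\<forall>k<m. Gn k x \<le> ennreal l" unfolding m_def using not_less_Least not_le by blast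
    with m x show "x \<in> (\<Union>n. A n)" by (auto simp: A_def)
  qed (auto simp: A_def less_SUP_iff)
  have key: "ennreal (l/2) * (\<integral>\<^sup>+x. indicator (A n) x * ennreal (v x) \<partial>M)
      \<le> (\<integral>\<^sup>+x. indicator (A n) x * g1 x * ennreal (v x) \<partial>M)" for n
  proof -
    have "ennreal (l/2) * (\<integral>\<^sup>+x. indicator (A n) x * ennreal (v x) \<partial>M)
        = ennreal (l/2) * (\<integral>\<^sup>+x. indicator (A n) x * E n (\<lambda>y. ennreal (v y)) x \<partial>M)"
      by (subst E_intg) (use A_F in auto)
    also have "\<dots> = (\<integral>\<^sup>+x. indicator (A n) x * (ennreal (l/2) * E n (\<lambda>y. ennreal (v y)) x) \<partial>M)"
      by (subst nn_integral_cmult[symmetric]) (auto intro!: nn_integral_cong simp: ac_simps)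
    also have "\<dots> \<le> (\<integral>\<^sup>+x. indicator (A n) x * E n (\<lambda>y. g1 y * ennreal (v y)) x \<partial>M)"
    proof (rule nn_integral_mono_AE)
      show "AE x in M. indicator (A n) x * (ennreal (l/2) * E n (\<lambda>y. ennreal (v y)) x)
          \<le> indicator (A n) x * E n (\<lambda>y. g1 y * ennreal (v y)) x"
        using step1[of n]
      proof eventually_elim
        case (elim x)
        show ?case
        proof (cases "x \<in> A n")
          case True
          then have "ennreal l < Gn n x" by (auto simp: A_def)
          then have "ennreal (l/2) * E n (\<lambda>y. ennreal (v y)) x \<le> E n (\<lambda>y. g1 y * ennreal (v y)) x"
            using elim l unfolding Gn_def by (intro ennreal_weak_aux) auto
          then show ?thesis using True by simp
        qed simp
      qed
    qed
    also have "\<dots> = (\<integral>\<^sup>+x. indicator (A n) x * (g1 x * ennreal (v x)) \<partial>M)"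
      by (rule E_intg) (use A_F in auto)
    finally show ?thesis by (simp add: ac_simps)
  qed
  have "ennreal (l/2) * (\<integral>\<^sup>+x. indicator {x\<in>space M. ennreal l < (SUP n. Gn n x)} x * ennreal (v x) \<partial>M)
      = ennreal (l/2) * (\<integral>\<^sup>+x. (\<Sum>n. indicator (A n) x * ennreal (v x)) \<partial>M)"
    by (simp add: UA[symmetric] suminf_indicator[OF disj, symmetric] ennreal_suminf_multc)
  also have "\<dots> = (\<Sum>n. ennreal (l/2) * (\<integral>\<^sup>+x. indicator (A n) x * ennreal (v x) \<partial>M))"
    by (subst nn_integral_suminf) (auto simp: ennreal_suminf_cmult)
  also have "\<dots> \<le> (\<Sum>n. (\<integral>\<^sup>+x. indicator (A n) x * g1 x * ennreal (v x) \<partial>M))"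
    by (intro suminf_le key) auto
  also have "\<dots> = (\<integral>\<^sup>+x. (\<Sum>n. indicator (A n) x * g1 x * ennreal (v x)) \<partial>M)"
    by (subst nn_integral_suminf) auto
  also have "\<dots> = (\<integral>\<^sup>+x. indicator (\<Union>n. A n) x * g1 x * ennreal (v x) \<partial>M)"
    by (simp add: suminf_indicator[OF disj, symmetric] ennreal_suminf_multc)
  also have "\<dots> \<le> (\<integral>\<^sup>+x. g1 x * ennreal (v x) \<partial>M)"
    by (intro nn_integral_mono) (auto simp: indicator_def)
  also have "\<dots> = (\<integral>\<^sup>+x. indicator {x\<in>space M. ennreal (l/2) < g x} x * g x * ennreal (v x) \<partial>M)"
    by (intro nn_integral_cong) (auto simp: g1_def indicator_def)
  finally show ?thesis .
qed

end


lemma lay_if: "lay b y = (\<integral>\<^sup>+t. (if 0 \<le> t \<and> ennreal t < y then ennreal (t powr b) else 0) \<partial>lborel)"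
  unfolding lay_def by (intro nn_integral_cong) (auto simp: indicator_def)

lemma ennreal_half_less_iff: "0 \<le> t \<Longrightarrow> ennreal (t/2) < y \<longleftrightarrow> ennreal t < 2 * y"
proof (cases "y = \<top>")
  case True then show ?thesis by (simp add: ennreal_mult_top)
next
  case False
  then obtain s where s: "y = ennreal s" "0 \<le> s" by (metis ennreal_cases)
  have e: "2 * y = ennreal (2 * s)" using s by (simp add: ennreal_mult)
  assume t: "0 \<le> t"
  have "ennreal (t/2) < y \<longleftrightarrow> t/2 < s" unfolding s(1) using t by (intro ennreal_less_iff) simp
  moreover have "ennreal t < 2 * y \<longleftrightarrow> t < 2 * s" unfolding e using t by (intro ennreal_less_iff)
  ultimately show ?thesis by auto
qed

context filt begin

lemma doob:
  fixes v :: "'a \<Rightarrow> real" and g :: "'a \<Rightarrow> ennreal" and q :: real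
  assumes [measurable]: "v \<in> borel_measurable M" "g \<in> borel_measurable M"
    and vpos: "\<And>x. x \<in> space M \<Longrightarrow> 0 < v x" and q: "1 < q"
  shows "(\<integral>\<^sup>+x. ennpow (SUP n. E n (\<lambda>y. g y * ennreal (v y)) x / E n (\<lambda>y. ennreal (v y)) x) q * ennreal (v x) \<partial>M)
     \<le> ennreal (2 powr q * q / (q - 1)) * (\<integral>\<^sup>+x. ennpow (g x) q * ennreal (v x) \<partial>M)"
proof -
  define G where "G = (\<lambda>x. SUP n. E n (\<lambda>y. g y * ennreal (v y)) x / E n (\<lambda>y. ennreal (v y)) x)"
  have [measurable]: "G \<in> borel_measurable M" unfolding G_def by measurable
  interpret sfM: sigma_finite_measure M by (rule sfm)
  interpret P: pair_sigma_finite M lborel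
    by (intro pair_sigma_finite.intro sfm) (rule lborel.sigma_finite_measure_axioms)
  define h where "h = (\<lambda>x t. if 0 \<le> t \<and> ennreal t < G x then ennreal (t powr (q-1)) * ennreal (v x) else 0)"
  define k where "k = (\<lambda>x t. if 0 \<le> t \<and> ennreal t < 2 * g x then ennreal (2 * t powr (q-2)) * (g x * ennreal (v x)) else 0)"
  have hm: "case_prod h \<in> borel_measurable (M \<Otimes>\<^sub>M lborel)" unfolding h_def by measurable
  have km: "case_prod k \<in> borel_measurable (M \<Otimes>\<^sub>M lborel)" unfolding k_def by measurable
  have "(\<integral>\<^sup>+x. ennpow (G x) q * ennreal (v x) \<partial>M) = (\<integral>\<^sup>+x. ennreal q * (\<integral>\<^sup>+t. h x t \<partial>lborel) \<partial>M)"
  proof (intro nn_integral_cong)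
    fix x assume "x \<in> space M"
    have "ennpow (G x) q * ennreal (v x) = ennreal q * (lay (q-1) (G x) * ennreal (v x))"
      using q by (simp add: ennpow_lay mult.assoc)
    also have "lay (q-1) (G x) * ennreal (v x) = (\<integral>\<^sup>+t. h x t \<partial>lborel)"
      unfolding lay_if h_def by (subst nn_integral_multc[symmetric]) (auto intro!: nn_integral_cong)
    finally show "ennpow (G x) q * ennreal (v x) = ennreal q * (\<integral>\<^sup>+t. h x t \<partial>lborel)" .
  qed
  also have "\<dots> = ennreal q * (\<integral>\<^sup>+x. (\<integral>\<^sup>+t. h x t \<partial>lborel) \<partial>M)"
    using lborel.borel_measurable_nn_integral[OF hm] by (subst nn_integral_cmult) auto
  also have "(\<integral>\<^sup>+x. (\<integral>\<^sup>+t. h x t \<partial>lborel) \<partial>M) = (\<integral>\<^sup>+t. (\<integral>\<^sup>+x. h x t \<partial>M) \<partial>lborel)"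
    using P.Fubini'[OF hm] by simp
  also have "\<dots> \<le> (\<integral>\<^sup>+t. (\<integral>\<^sup>+x. k x t \<partial>M) \<partial>lborel)"
  proof (rule nn_integral_mono)
    fix t :: real assume "t \<in> space lborel"
    show "(\<integral>\<^sup>+x. h x t \<partial>M) \<le> (\<integral>\<^sup>+x. k x t \<partial>M)"
    proof (cases "0 < t")
      case False
      then have "h x t = 0" for x by (cases "t = 0") (auto simp: h_def)
      then show ?thesis by simp
    next
      case t: True
      have "(\<integral>\<^sup>+x. h x t \<partial>M) = ennreal (t powr (q-1)) * (\<integral>\<^sup>+x. indicator {x\<in>space M. ennreal t < G x} x * ennreal (v x) \<partial>M)"
        using t by (subst nn_integral_cmult[symmetric]) (auto intro!: nn_integral_cong simp: h_def indicator_def)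
      also have "(\<integral>\<^sup>+x. indicator {x\<in>space M. ennreal t < G x} x * ennreal (v x) \<partial>M)
          \<le> ennreal (2/t) * (\<integral>\<^sup>+x. indicator {x\<in>space M. ennreal (t/2) < g x} x * g x * ennreal (v x) \<partial>M)"
      proof -
        have w: "ennreal (t/2) * (\<integral>\<^sup>+x. indicator {x\<in>space M. ennreal t < G x} x * ennreal (v x) \<partial>M)
          \<le> (\<integral>\<^sup>+x. indicator {x\<in>space M. ennreal (t/2) < g x} x * g x * ennreal (v x) \<partial>M)"
          unfolding G_def by (rule weak_type) (use vpos t in auto)
        have "ennreal (2/t) * ennreal (t/2) = 1" using t by (simp add: ennreal_mult[symmetric] del: ennreal_mult)
        then have "(\<integral>\<^sup>+x. indicator {x\<in>space M. ennreal t < G x} x * ennreal (v x) \<partial>M) =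
            ennreal (2/t) * (ennreal (t/2) * (\<integral>\<^sup>+x. indicator {x\<in>space M. ennreal t < G x} x * ennreal (v x) \<partial>M))"
          by (simp add: mult.assoc[symmetric])
        also have "\<dots> \<le> ennreal (2/t) * (\<integral>\<^sup>+x. indicator {x\<in>space M. ennreal (t/2) < g x} x * g x * ennreal (v x) \<partial>M)"
          by (rule mult_left_mono[OF w]) simp
        finally show ?thesis .
      qed
      finally have "(\<integral>\<^sup>+x. h x t \<partial>M) \<le> ennreal (t powr (q-1)) * (ennreal (2/t) *
          (\<integral>\<^sup>+x. indicator {x\<in>space M. ennreal (t/2) < g x} x * g x * ennreal (v x) \<partial>M))"
        by (simp add: mult_left_mono)
      also have "\<dots> = ennreal (2 * t powr (q-2)) *
          (\<integral>\<^sup>+x. indicator {x\<in>space M. ennreal (t/2) < g x} x * g x * ennreal (v x) \<partial>M)"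
      proof -
        have "t powr (q-1) * (2/t) = 2 * t powr (q-2)"
          using t by (simp add: powr_diff field_simps powr_add[symmetric] power2_eq_square)
        then show ?thesis using t by (simp add: mult.assoc[symmetric] ennreal_mult[symmetric] del: ennreal_mult)
      qed
      also have "\<dots> = (\<integral>\<^sup>+x. k x t \<partial>M)"
        using t by (subst nn_integral_cmult[symmetric])
          (auto intro!: nn_integral_cong simp: k_def indicator_def ennreal_half_less_iff ac_simps)
      finally show ?thesis .
    qed
  qed
  also have "\<dots> = (\<integral>\<^sup>+x. (\<integral>\<^sup>+t. k x t \<partial>lborel) \<partial>M)"
    using P.Fubini'[OF km] by simp
  finally have step: "(\<integral>\<^sup>+x. ennpow (G x) q * ennreal (v x) \<partial>M) \<le> ennreal q * (\<integral>\<^sup>+x. (\<integral>\<^sup>+t. k x t \<partial>lborel) \<partial>M)"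
    by (simp add: mult_left_mono)
  also have "\<dots> = (\<integral>\<^sup>+x. ennreal q * (\<integral>\<^sup>+t. k x t \<partial>lborel) \<partial>M)"
    using lborel.borel_measurable_nn_integral[OF km] by (subst nn_integral_cmult) auto
  also have "\<dots> \<le> (\<integral>\<^sup>+x. ennreal (2 powr q * q / (q - 1)) * (ennpow (g x) q * ennreal (v x)) \<partial>M)"
  proof (intro nn_integral_mono)
    fix x assume x: "x \<in> space M"
    have kk: "(\<integral>\<^sup>+t. k x t \<partial>lborel) = ennreal 2 * lay (q-2) (2 * g x) * (g x * ennreal (v x))"
      unfolding lay_if k_def
      by (subst nn_integral_cmult[symmetric], simp, subst nn_integral_multc[symmetric], simp)
         (auto intro!: nn_integral_cong simp: ennreal_mult)
    show "ennreal q * (\<integral>\<^sup>+t. k x t \<partial>lborel) \<le> ennreal (2 powr q * q / (q - 1)) * (ennpow (g x) q * ennreal (v x))"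
    proof (cases "g x = \<top>")
      case True
      have "0 < 2 powr q * q / (q - 1)" using q by simp
      then show ?thesis using True vpos[OF x] q by (simp add: ennreal_mult_top ennreal_top_mult)
    next
      case False
      then obtain r where r: "g x = ennreal r" "0 \<le> r" by (metis ennreal_cases)
      have "2 * g x = ennreal (2 * r)" using r by (simp add: ennreal_mult)
      then have "ennreal q * (\<integral>\<^sup>+t. k x t \<partial>lborel) =
          ennreal (q * (2 * ((2 * r) powr (q - 1) / (q - 1)) * (r * v x)))"
      proof -
        define Y where "Y = (2 * r) powr (q - 1) / (q - 1)"
        have Y0: "0 \<le> Y" using q by (simp add: Y_def)
        have "ennreal q * (\<integral>\<^sup>+t. k x t \<partial>lborel) = ennreal q * (2 * ennreal Y * (ennreal r * ennreal (v x)))"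
          unfolding kk Y_def using q r \<open>2 * g x = _\<close> by (simp add: lay_finite)
        also have "\<dots> = ennreal (q * (2 * Y * (r * v x)))"
          using q r vpos[OF x] Y0 by (simp add: ennreal_mult mult_ac)
        finally show ?thesis unfolding Y_def .
      qed
      also have "q * (2 * ((2 * r) powr (q - 1) / (q - 1)) * (r * v x)) = 2 powr q * q / (q - 1) * (r powr q * v x)"
      proof (cases "r = 0")
        case False
        then have "r > 0" using r by simp
        have e1: "(2 * r) powr (q - 1) = 2 powr (q-1) * r powr (q-1)" using r by (simp add: powr_mult)
        have e2: "2 * 2 powr (q-1) = 2 powr q" by (simp add: powr_diff)
        have e3: "r * r powr (q-1) = r powr q" using \<open>r > 0\<close> by (simp add: powr_diff)
        have "q * (2 * ((2 * r) powr (q - 1) / (q - 1)) * (r * v x)) =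
            q / (q-1) * v x * ((2 * 2 powr (q-1)) * (r * r powr (q-1)))"
          unfolding e1 by (simp add: field_simps)
        also have "\<dots> = 2 powr q * q / (q - 1) * (r powr q * v x)"
          unfolding e2 e3 by (simp add: field_simps)
        finally show ?thesis .
      qed simp
      finally show ?thesis using r q vpos[OF x]
        by (simp add: ennpow_ennreal ennreal_mult[symmetric] del: ennreal_mult)
    qed
  qed
  also have "\<dots> = ennreal (2 powr q * q / (q - 1)) * (\<integral>\<^sup>+x. ennpow (g x) q * ennreal (v x) \<partial>M)"
    by (rule nn_integral_cmult) measurable
  finally show ?thesis unfolding G_def .
qed

end


definition kd :: "real \<Rightarrow> real" where "kd q = 2 powr q * q / (q - 1)"

lemma kd_pos: "1 < q \<Longrightarrow> 0 < kd q"
  by (simp add: kd_def)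

lemma ennpow_mult_ennreal:
  assumes "0 \<le> c" "0 < e"
  shows "ennpow (X * ennreal c) e = ennpow X e * ennreal (c powr e)"
  using assms by (simp add: ennpow_mult ennpow_ennreal)

lemma ennreal_div_mult_cancel:
  fixes a S X :: ennreal
  assumes "0 < a" "a < \<top>"
  shows "S * X = (a * S) * (X / a)"
proof -
  have "a / a = 1" using assms by (intro ennreal_divide_self) auto
  then have "a * (X / a) = X" by (metis ennreal_times_divide mult.commute mult_1_right)
  then show ?thesis by (simp add: mult_ac)
qed

context filt begin

lemma lerner:
  fixes w :: "'a \<Rightarrow> real" and f :: "'a \<Rightarrow> ennreal" and p A :: real
  assumes [measurable]: "w \<in> borel_measurable M" "f \<in> borel_measurable M"
    and wpos: "\<And>x. x \<in> space M \<Longrightarrow> 0 < w x" and p: "1 < p" and A: "0 \<le> A"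
    and Ap: "\<And>n. AE x in M. E n (\<lambda>y. ennreal (w y)) x * ennpow (E n (\<lambda>y. ennreal (w y powr (1/(1-p))))  x) (p-1) \<le> ennreal A"
  shows "(\<integral>\<^sup>+x. ennpow (SUP n. E n f x) p * ennreal (w x) \<partial>M)
     \<le> ennreal (kd p * kd (p/(p-1)) * A powr (p/(p-1))) * (\<integral>\<^sup>+x. ennpow (f x) p * ennreal (w x) \<partial>M)"
proof -
  define p' where "p' = p/(p-1)"
  have p'1: "1 < p'" using p by (simp add: p'_def)
  define \<sigma> where "\<sigma> = (\<lambda>y. w y powr (1/(1-p)))"
  have [measurable]: "\<sigma> \<in> borel_measurable M" unfolding \<sigma>_def by measurable
  have \<sigma>pos: "\<And>x. x \<in> space M \<Longrightarrow> 0 < \<sigma> x" using wpos by (simp add: \<sigma>_def less_imp_neq[symmetric])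
  have Ap': "\<And>n. AE x in M. E n (\<lambda>y. ennreal (w y)) x * ennpow (E n (\<lambda>y. ennreal (\<sigma> y)) x) (p-1) \<le> ennreal A"
    using Ap unfolding \<sigma>_def .
  have fin: "AE x in M. 0 < E n (\<lambda>y. ennreal (w y)) x \<and> E n (\<lambda>y. ennreal (w y)) x < \<top> \<and>
      0 < E n (\<lambda>y. ennreal (\<sigma> y)) x \<and> E n (\<lambda>y. ennreal (\<sigma> y)) x < \<top>" for n
  proof -
    have "AE x in M. 0 < E n (\<lambda>y. ennreal (w y)) x" by (rule E_pos) (use wpos in auto)
    moreover have "AE x in M. 0 < E n (\<lambda>y. ennreal (\<sigma> y)) x" by (rule E_pos) (use \<sigma>pos in auto)
    ultimately show ?thesis using Ap'[of n]
    proof eventually_elim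
      case (elim x)
      show ?case
      proof (intro conjI)
        show "E n (\<lambda>y. ennreal (\<sigma> y)) x < \<top>"
        proof (rule ccontr)
          assume "\<not> ?thesis"
          then have "E n (\<lambda>y. ennreal (\<sigma> y)) x = \<top>" using top.not_eq_extremum by blast
          with elim show False by (simp add: ennreal_mult_top top_unique split: if_splits)
        qed
        show "E n (\<lambda>y. ennreal (w y)) x < \<top>"
        proof (rule ccontr)
          assume "\<not> ?thesis"
          then have "E n (\<lambda>y. ennreal (w y)) x = \<top>" using top.not_eq_extremum by blast
          with elim show False by (simp add: ennreal_top_mult top_unique split: if_splits)
        qed
      qed (use elim in auto)
    qed
  qed
  define H where "H = (\<lambda>x. SUP k. E k f x / E k (\<lambda>y. ennreal (\<sigma> y)) x)"
  have [measurable]: "H \<in> borel_measurable M" unfolding H_def by measurable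
  define g' where "g' = (\<lambda>y. ennpow (H y) (p-1) * ennreal (1 / w y))"
  have [measurable]: "g' \<in> borel_measurable M" unfolding g'_def by measurable
  define Gw where "Gw = (\<lambda>x. SUP n. E n (\<lambda>y. g' y * ennreal (w y)) x / E n (\<lambda>y. ennreal (w y)) x)"
  have [measurable]: "Gw \<in> borel_measurable M" unfolding Gw_def by measurable
  have main_n: "AE x in M. ennpow (E n f x) (p-1) \<le> ennreal A * Gw x" for n
  proof -
    define h where "h = (\<lambda>x. E n f x / E n (\<lambda>y. ennreal (\<sigma> y)) x)"
    have hF[measurable]: "h \<in> borel_measurable (F n)" unfolding h_def by measurable
    have [measurable]: "h \<in> borel_measurable M" unfolding h_def by measurable
    have "AE x in M. ennpow (h x) (p-1) = E n (\<lambda>y. ennpow (h y) (p-1)) x"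
      by (rule E_Fmeas) measurable
    moreover have "AE x in M. E n (\<lambda>y. ennpow (h y) (p-1)) x \<le> E n (\<lambda>y. ennpow (H y) (p-1)) x"
    proof (rule E_mono)
      show "AE x in M. ennpow (h x) (p-1) \<le> ennpow (H x) (p-1)"
        using p by (intro AE_I2 ennpow_mono) (auto simp: h_def H_def intro: SUP_upper)
    qed measurable
    moreover have "AE x in M. E n (\<lambda>y. ennpow (H y) (p-1)) x = E n (\<lambda>y. g' y * ennreal (w y)) x"
    proof (rule E_cong)
      show "AE x in M. ennpow (H x) (p-1) = g' x * ennreal (w x)"
      proof (rule AE_I2)
        fix x assume x: "x \<in> space M"
        have "ennreal (1 / w x) * ennreal (w x) = 1" using wpos[OF x] by (simp add: ennreal_mult[symmetric] del: ennreal_mult)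
        then show "ennpow (H x) (p-1) = g' x * ennreal (w x)" by (simp add: g'_def mult.assoc)
      qed
    qed measurable
    ultimately show ?thesis using fin[of n] Ap'[of n]
    proof eventually_elim
      case (elim x)
      let ?a = "E n (\<lambda>y. ennreal (w y)) x" and ?s = "E n (\<lambda>y. ennreal (\<sigma> y)) x" and ?e = "E n f x"
        and ?X = "E n (\<lambda>y. g' y * ennreal (w y)) x"
      have "?e = ?s * h x"
      proof -
        have "?s / ?s = 1" using elim by (intro ennreal_divide_self) auto
        then show ?thesis unfolding h_def by (metis ennreal_times_divide mult.commute mult_1_right)
      qed
      then have "ennpow ?e (p-1) = ennpow ?s (p-1) * ennpow (h x) (p-1)"
        using p by (simp add: ennpow_mult)
      also have "\<dots> \<le> ennpow ?s (p-1) * ?X"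
        using elim by (intro mult_left_mono) auto
      also have "\<dots> = (?a * ennpow ?s (p-1)) * (?X / ?a)"
        using elim by (intro ennreal_div_mult_cancel) auto
      also have "\<dots> \<le> ennreal A * (?X / ?a)"
        using elim by (intro mult_right_mono) auto
      also have "?X / ?a \<le> Gw x" unfolding Gw_def by (rule SUP_upper) simp
      finally show ?case by (simp add: mult_left_mono)
    qed
  qed
  have "AE x in M. \<forall>n. ennpow (E n f x) (p-1) \<le> ennreal A * Gw x"
    using main_n by (simp add: AE_all_countable)
  then have Mf: "AE x in M. ennpow (SUP n. E n f x) p \<le> ennreal (A powr p') * ennpow (Gw x) p'"
  proof eventually_elim
    case (elim x)
    have "(SUP n. E n f x) \<le> ennpow (ennreal A * Gw x) (1/(p-1))"
    proof (rule SUP_least)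
      fix n
      have "E n f x = ennpow (ennpow (E n f x) (p-1)) (1/(p-1))"
        using p by (simp add: ennpow_inv)
      also have "\<dots> \<le> ennpow (ennreal A * Gw x) (1/(p-1))"
        using elim p by (intro ennpow_mono) auto
      finally show "E n f x \<le> ennpow (ennreal A * Gw x) (1/(p-1))" .
    qed
    then have "ennpow (SUP n. E n f x) p \<le> ennpow (ennpow (ennreal A * Gw x) (1/(p-1))) p"
      using p by (intro ennpow_mono) auto
    also have "\<dots> = ennpow (ennreal A * Gw x) p'"
      using p by (simp add: ennpow_ennpow p'_def)
    also have "\<dots> = ennreal (A powr p') * ennpow (Gw x) p'"
      using p'1 A by (simp add: ennpow_mult ennpow_ennreal mult.commute)
    finally show ?case .
  qed
  have "(\<integral>\<^sup>+x. ennpow (SUP n. E n f x) p * ennreal (w x) \<partial>M)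
      \<le> (\<integral>\<^sup>+x. ennreal (A powr p') * (ennpow (Gw x) p' * ennreal (w x)) \<partial>M)"
    using Mf by (intro nn_integral_mono_AE) (auto elim!: eventually_mono intro: mult_right_mono simp: mult.assoc[symmetric])
  also have "\<dots> = ennreal (A powr p') * (\<integral>\<^sup>+x. ennpow (Gw x) p' * ennreal (w x) \<partial>M)"
    by (rule nn_integral_cmult) measurable
  also have "(\<integral>\<^sup>+x. ennpow (Gw x) p' * ennreal (w x) \<partial>M) \<le> ennreal (kd p') * (\<integral>\<^sup>+x. ennpow (g' x) p' * ennreal (w x) \<partial>M)"
    unfolding Gw_def kd_def by (rule doob) (use wpos p'1 in auto)
  also have "(\<integral>\<^sup>+x. ennpow (g' x) p' * ennreal (w x) \<partial>M) = (\<integral>\<^sup>+x. ennpow (H x) p * ennreal (\<sigma> x) \<partial>M)"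
  proof (rule nn_integral_cong)
    fix x assume x: "x \<in> space M"
    have w0: "0 < w x" using wpos[OF x] .
    have "ennpow (g' x) p' * ennreal (w x) = ennpow (H x) ((p-1) * p') * ennreal ((1 / w x) powr p' * w x)"
      unfolding g'_def using p p'1 w0
      by (simp add: ennpow_mult_ennreal ennpow_ennpow mult.assoc ennreal_mult)
    also have "(p-1) * p' = p" using p by (simp add: p'_def)
    also have "(1 / w x) powr p' * w x = \<sigma> x"
    proof -
      have "(1 / w x) powr p' * w x = w x powr (- p') * w x powr 1" using w0 by (simp add: powr_minus_divide powr_divide)
      also have "\<dots> = w x powr (1 - p')" by (simp only: powr_add[symmetric]) simp
      also have "1 - p' = 1/(1-p)" using p by (simp add: p'_def field_simps)
      finally show ?thesis by (simp add: \<sigma>_def)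
    qed
    finally show "ennpow (g' x) p' * ennreal (w x) = ennpow (H x) p * ennreal (\<sigma> x)" .
  qed
  also have "\<dots> = (\<integral>\<^sup>+x. ennpow (SUP k. E k (\<lambda>y. (f y * ennreal (1 / \<sigma> y)) * ennreal (\<sigma> y)) x / E k (\<lambda>y. ennreal (\<sigma> y)) x) p * ennreal (\<sigma> x) \<partial>M)"
  proof (rule nn_integral_cong_AE)
    have "AE x in M. E k (\<lambda>y. (f y * ennreal (1 / \<sigma> y)) * ennreal (\<sigma> y)) x = E k f x" for k
    proof (rule E_cong)
      show "AE x in M. f x * ennreal (1 / \<sigma> x) * ennreal (\<sigma> x) = f x"
      proof (rule AE_I2)
        fix x assume x: "x \<in> space M"
        have "ennreal (1 / \<sigma> x) * ennreal (\<sigma> x) = 1" using \<sigma>pos[OF x] by (simp add: ennreal_mult[symmetric] del: ennreal_mult)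
        then show "f x * ennreal (1 / \<sigma> x) * ennreal (\<sigma> x) = f x" by (simp add: mult.assoc)
      qed
    qed measurable
    then have "AE x in M. \<forall>k. E k (\<lambda>y. (f y * ennreal (1 / \<sigma> y)) * ennreal (\<sigma> y)) x = E k f x"
      by (simp add: AE_all_countable)
    then show "AE x in M. ennpow (H x) p * ennreal (\<sigma> x) = ennpow (SUP k. E k (\<lambda>y. (f y * ennreal (1 / \<sigma> y)) * ennreal (\<sigma> y)) x / E k (\<lambda>y. ennreal (\<sigma> y)) x) p * ennreal (\<sigma> x)"
      by eventually_elim (simp add: H_def)
  qed
  also have "\<dots> \<le> ennreal (kd p) * (\<integral>\<^sup>+x. ennpow (f x * ennreal (1 / \<sigma> x)) p * ennreal (\<sigma> x) \<partial>M)"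
    unfolding kd_def by (rule doob) (use \<sigma>pos p in auto)
  also have "(\<integral>\<^sup>+x. ennpow (f x * ennreal (1 / \<sigma> x)) p * ennreal (\<sigma> x) \<partial>M) = (\<integral>\<^sup>+x. ennpow (f x) p * ennreal (w x) \<partial>M)"
  proof (rule nn_integral_cong)
    fix x assume x: "x \<in> space M"
    have s0: "0 < \<sigma> x" using \<sigma>pos[OF x] .
    have "ennpow (f x * ennreal (1 / \<sigma> x)) p * ennreal (\<sigma> x) = ennpow (f x) p * ennreal ((1 / \<sigma> x) powr p * \<sigma> x)"
      using p s0 by (simp add: ennpow_mult_ennreal mult.assoc ennreal_mult)
    also have "(1 / \<sigma> x) powr p * \<sigma> x = w x"
    proof -
      have "(1 / \<sigma> x) powr p * \<sigma> x = \<sigma> x powr (- p) * \<sigma> x powr 1" using s0 by (simp add: powr_minus_divide powr_divide)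
      also have "\<dots> = \<sigma> x powr (1 - p)" by (simp only: powr_add[symmetric]) simp
      also have "\<dots> = w x powr (1/(1-p) * (1-p))" unfolding \<sigma>_def using wpos[OF x] by (simp add: powr_powr)
      also have "1/(1-p) * (1-p) = 1" using p by simp
      finally show ?thesis using wpos[OF x] by simp
    qed
    finally show "ennpow (f x * ennreal (1 / \<sigma> x)) p * ennreal (\<sigma> x) = ennpow (f x) p * ennreal (w x)" .
  qed
  finally show ?thesis
    by (simp add: p'_def mult_ac ennreal_mult' kd_pos p less_imp_le mult_right_mono)
qed

end


lemma young_ennreal:
  assumes r: "1 < r" and mu: "0 < \<mu>"
  shows "ennreal (r * \<mu> powr (r-1)) * z \<le> ennpow z r + ennreal ((r-1) * \<mu> powr r)"
proof (cases "z = \<top>")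
  case True then show ?thesis by simp
next
  case False
  then obtain t where t: "z = ennreal t" "0 \<le> t" by (metis ennreal_cases)
  define q where "q = r / (r - 1)"
  have q1: "1 < q" using r by (simp add: q_def)
  have pq: "1/r + 1/q = 1" using r by (simp add: q_def field_simps)
  have "t * \<mu> powr (r-1) \<le> t powr r / r + (\<mu> powr (r-1)) powr q / q"
    by (rule Youngs_inequality) (use r q1 pq t in auto)
  also have "(\<mu> powr (r-1)) powr q = \<mu> powr r" using r by (simp add: powr_powr q_def)
  finally have "t * \<mu> powr (r-1) \<le> t powr r / r + \<mu> powr r / q" .
  then have "r * (t * \<mu> powr (r-1)) \<le> r * (t powr r / r + \<mu> powr r / q)"
    using r by (intro mult_left_mono) auto
  also have "r * (t powr r / r + \<mu> powr r / q) = t powr r + (r-1) * \<mu> powr r"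
    using r by (simp add: q_def field_simps)
  finally have "r * \<mu> powr (r-1) * t \<le> t powr r + (r-1) * \<mu> powr r" by (simp add: mult_ac)
  then show ?thesis using t r
    by (simp add: ennpow_ennreal ennreal_mult[symmetric] ennreal_plus[symmetric] ennreal_leI del: ennreal_plus)
qed

lemma jensen_sum:
  fixes c :: "nat \<Rightarrow> real" and z :: "nat \<Rightarrow> ennreal"
  assumes r: "1 \<le> r" and c: "\<And>k. 0 \<le> c k" "c sums 1"
  shows "ennpow (\<Sum>k. ennreal (c k) * z k) r \<le> (\<Sum>k. ennreal (c k) * ennpow (z k) r)"
proof (cases "r = 1")
  case True then show ?thesis by simp
next
  case False
  with r have r1: "1 < r" by simp
  have csum: "(\<Sum>k. ennreal (c k)) = 1" using suminf_ennreal_eq[OF c] by simp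
  define m where "m = (\<Sum>k. ennreal (c k) * z k)"
  show ?thesis
  proof (cases "m = \<top>")
    case True
    have "m \<le> (\<Sum>k. ennreal (c k) * (1 + ennpow (z k) r))"
      unfolding m_def by (intro suminf_le mult_left_mono ennpow_le_1_plus r) auto
    also have "\<dots> = (\<Sum>k. ennreal (c k)) + (\<Sum>k. ennreal (c k) * ennpow (z k) r)"
      by (simp add: distrib_left suminf_add[OF summableI summableI])
    also have "\<dots> = 1 + (\<Sum>k. ennreal (c k) * ennpow (z k) r)" by (simp add: csum)
    finally have "(\<Sum>k. ennreal (c k) * ennpow (z k) r) = \<top>"
      using True by (auto simp: top_unique)
    then show ?thesis by simp
  next
    case False
    then obtain \<mu> where mu: "m = ennreal \<mu>" "0 \<le> \<mu>" by (metis ennreal_cases)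
    show ?thesis
    proof (cases "\<mu> = 0")
      case True then show ?thesis using mu by (simp add: m_def[symmetric])
    next
      case False
      then have mu0: "0 < \<mu>" using mu by simp
      have "ennreal (r * \<mu> powr (r-1)) * m = (\<Sum>k. ennreal (c k) * (ennreal (r * \<mu> powr (r-1)) * z k))"
        unfolding m_def by (simp add: ennreal_suminf_cmult[symmetric] mult_ac del: ennreal_suminf_cmult)
      also have "\<dots> \<le> (\<Sum>k. ennreal (c k) * (ennpow (z k) r + ennreal ((r-1) * \<mu> powr r)))"
        by (intro suminf_le mult_left_mono young_ennreal r1 mu0) auto
      also have "\<dots> = (\<Sum>k. ennreal (c k) * ennpow (z k) r) + (\<Sum>k. ennreal (c k)) * ennreal ((r-1) * \<mu> powr r)"
        by (simp add: distrib_left suminf_add[OF summableI summableI, symmetric] ennreal_suminf_multc)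
      also have "\<dots> = (\<Sum>k. ennreal (c k) * ennpow (z k) r) + ennreal ((r-1) * \<mu> powr r)"
        by (simp add: csum)
      finally have le: "ennreal (r * \<mu> powr (r-1)) * m \<le> (\<Sum>k. ennreal (c k) * ennpow (z k) r) + ennreal ((r-1) * \<mu> powr r)" .
      have "ennreal (r * \<mu> powr (r-1)) * m = ennreal (\<mu> powr r) + ennreal ((r-1) * \<mu> powr r)"
      proof -
        have "r * \<mu> powr (r-1) * \<mu> = \<mu> powr r + (r-1) * \<mu> powr r"
          using mu0 by (simp add: powr_diff field_simps)
        then show ?thesis using mu r1 mu0
          by (simp add: ennreal_mult[symmetric] ennreal_plus[symmetric] del: ennreal_plus)
      qed
      with le have "ennreal (\<mu> powr r) + ennreal ((r-1) * \<mu> powr r) \<le>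
          (\<Sum>k. ennreal (c k) * ennpow (z k) r) + ennreal ((r-1) * \<mu> powr r)" by simp
      then have "ennreal ((r-1) * \<mu> powr r) + ennreal (\<mu> powr r) \<le> ennreal ((r-1) * \<mu> powr r) + (\<Sum>k. ennreal (c k) * ennpow (z k) r)"
        by (simp only: add.commute)
      then have "ennreal (\<mu> powr r) \<le> (\<Sum>k. ennreal (c k) * ennpow (z k) r)"
        unfolding ennreal_add_left_cancel_le by simp
      then show ?thesis using mu by (simp add: m_def[symmetric] ennpow_ennreal)
    qed
  qed
qed


lemma weight_ineq:
  fixes nk nn \<epsilon> \<delta> r :: real
  assumes "0 \<le> nk" "0 < \<delta>" "0 < nn + \<epsilon>" "1 \<le> r"
  shows "((nk + \<delta>) / (nn + \<epsilon>)) powr (1 - r) * nk powr r \<le> (nn + \<epsilon>) powr (r - 1) * nk"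
proof (cases "nk = 0")
  case True then show ?thesis by simp
next
  case False
  then have nk: "0 < nk" using assms by simp
  define C where "C = ((nk + \<delta>) / (nn + \<epsilon>)) powr (1 - r)"
  define A' where "A' = (nk + \<delta>) powr (r - 1)"
  define B where "B = (nn + \<epsilon>) powr (r - 1)"
  have A'0: "0 < A'" using assms nk by (simp add: A'_def)
  have CA: "C * A' = B"
  proof -
    have e: "\<And>x. 0 < x \<Longrightarrow> x powr (1 - r) = 1 / x powr (r - 1)"
      using powr_minus_divide[of _ "r - 1"] by simp
    have "C = (nk + \<delta>) powr (1 - r) / (nn + \<epsilon>) powr (1 - r)"
      using assms nk by (simp add: powr_divide C_def)
    also have "\<dots> = B / A'"
      using assms nk e[of "nk + \<delta>"] e[of "nn + \<epsilon>"] by (simp add: A'_def B_def)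
    finally show ?thesis using A'0 by simp
  qed
  have C0: "0 \<le> C" by (simp add: C_def)
  have "nk powr r = nk powr (r - 1) * nk"
    using nk by (simp add: powr_diff)
  moreover have "nk powr (r - 1) \<le> A'"
    using assms nk unfolding A'_def by (intro powr_mono2) auto
  ultimately have "C * nk powr r \<le> C * A' * nk"
    using C0 nk by (simp add: mult.assoc mult_left_mono mult_right_mono)
  then show ?thesis using CA by (simp add: C_def B_def)
qed

lemma limit_powr_le:
  fixes Q :: ennreal
  assumes "\<And>m. Q \<le> ennreal ((a + 1 / Suc m) powr r)" "0 \<le> a" "0 < r"
  shows "Q \<le> ennreal (a powr r)"
proof -
  have "(\<lambda>m. a + 1 / real (Suc m)) \<longlonglongrightarrow> a + 0"
    by (intro tendsto_add tendsto_const LIMSEQ_Suc[OF lim_inverse_n'])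
  then have "(\<lambda>m. (a + 1 / real (Suc m)) powr r) \<longlonglongrightarrow> a powr r"
    using assms by (intro tendsto_powr') (auto intro!: always_eventually)
  then have "(\<lambda>m. ennreal ((a + 1 / real (Suc m)) powr r)) \<longlonglongrightarrow> ennreal (a powr r)"
    by (rule tendsto_ennrealI)
  then show ?thesis by (rule LIMSEQ_le_const) (use assms in auto)
qed


lemma ennreal_le_suminf: "(f::nat \<Rightarrow> ennreal) i \<le> (\<Sum>k. f k)"
  using sum_le_suminf[OF summableI, of "{i}" f] by simp

context filt begin

lemma cond_mink:
  fixes v :: "'a \<Rightarrow> real" and u :: "nat \<Rightarrow> 'a \<Rightarrow> ennreal" and r :: real
  assumes r: "1 \<le> r" and [measurable]: "v \<in> borel_measurable M" "\<And>k. u k \<in> borel_measurable M"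
  shows "AE x in M. ennpow (E n (\<lambda>y. ennreal (v y) * ennpow (\<Sum>k. u k y) r) x) (1/r)
      \<le> (\<Sum>k. ennpow (E n (\<lambda>y. ennreal (v y) * ennpow (u k y) r) x) (1/r))"
proof -
  define P where "P = (\<lambda>k. E n (\<lambda>y. ennreal (v y) * ennpow (u k y) r))"
  define Nk where "Nk = (\<lambda>k x. ennpow (P k x) (1/r))"
  define N where "N = (\<lambda>x. \<Sum>k. Nk k x)"
  define Q where "Q = E n (\<lambda>y. ennreal (v y) * ennpow (\<Sum>k. u k y) r)"
  have [measurable]: "P k \<in> borel_measurable (F n)" for k unfolding P_def by measurable
  have [measurable]: "Nk k \<in> borel_measurable (F n)" for k unfolding Nk_def by measurable
  have [measurable]: "N \<in> borel_measurable (F n)" unfolding N_def by measurable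
  have PN: "P k x = ennpow (Nk k x) r" for k x
    using r by (simp add: Nk_def ennpow_ennpow)
  have NkN: "Nk k x \<le> N x" for k x unfolding N_def by (rule ennreal_le_suminf)
  have bound: "AE x in M. N x < \<top> \<longrightarrow> Q x \<le> ennreal ((enn2real (N x) + 1 / real (Suc m)) powr r)" for m
  proof -
    define \<epsilon> where "\<epsilon> = 1 / real (Suc m)"
    have \<epsilon>: "0 < \<epsilon>" by (simp add: \<epsilon>_def)
    define c where "c = (\<lambda>k x. if N x < \<top> then (enn2real (Nk k x) + \<epsilon> * (1/2)^Suc k) / (enn2real (N x) + \<epsilon>)
        else (1/2)^Suc k)"
    have c_pos: "0 < c k x" for k x
      using \<epsilon> by (simp add: c_def add_nonneg_pos)
    have c_sums: "(\<lambda>k. c k x) sums 1" for x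
    proof (cases "N x < \<top>")
      case True
      have nk_fin: "Nk k x \<noteq> \<top>" for k using NkN[of k x] True by (auto simp: top_unique)
      have eq: "(\<Sum>k. ennreal (enn2real (Nk k x))) = N x"
        unfolding N_def using nk_fin by (intro suminf_cong) (simp add: ennreal_enn2real_if)
      have sm: "summable (\<lambda>k. enn2real (Nk k x))"
        using eq True by (intro summable_suminf_not_top) auto
      have "(\<lambda>k. enn2real (Nk k x)) sums enn2real (N x)"
      proof -
        have "(\<Sum>k. ennreal (enn2real (Nk k x))) = ennreal (\<Sum>k. enn2real (Nk k x))"
          by (rule suminf_ennreal2[OF _ sm]) simp
        with eq have "ennreal (\<Sum>k. enn2real (Nk k x)) = N x" by simp
        moreover have "0 \<le> (\<Sum>k. enn2real (Nk k x))" using sm by (intro suminf_nonneg) auto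
        ultimately have "(\<Sum>k. enn2real (Nk k x)) = enn2real (N x)"
          by (metis enn2real_ennreal)
        then show ?thesis using sm by (simp add: summable_sums_iff)
      qed
      then have "(\<lambda>k. enn2real (Nk k x) + \<epsilon> * (1/2)^Suc k) sums (enn2real (N x) + \<epsilon> * 1)"
        by (intro sums_add sums_mult power_half_series)
      then have "(\<lambda>k. (enn2real (Nk k x) + \<epsilon> * (1/2)^Suc k) / (enn2real (N x) + \<epsilon>)) sums
          ((enn2real (N x) + \<epsilon> * 1) / (enn2real (N x) + \<epsilon>))"
        by (rule sums_divide)
      moreover have "(enn2real (N x) + \<epsilon> * 1) / (enn2real (N x) + \<epsilon>) = 1"
      proof -
        have "0 < enn2real (N x) + \<epsilon>" using \<epsilon> by (simp add: add_nonneg_pos)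
        then show ?thesis by simp
      qed
      ultimately show ?thesis using True by (simp add: c_def)
    next
      case False then show ?thesis using power_half_series by (simp add: c_def)
    qed
    have c_meas[measurable]: "c k \<in> borel_measurable (F n)" for k unfolding c_def by measurable
    define d where "d = (\<lambda>k x. ennreal (c k x powr (1 - r)))"
    have d_meas[measurable]: "d k \<in> borel_measurable (F n)" for k unfolding d_def by measurable
    have d_measM[measurable]: "d k \<in> borel_measurable M" for k by (rule meas_M[of _ n]) simp
    have pw: "ennpow (\<Sum>k. u k y) r \<le> (\<Sum>k. d k y * ennpow (u k y) r)" for y
    proof -
      have "(\<Sum>k. u k y) = (\<Sum>k. ennreal (c k y) * (u k y * ennreal (1 / c k y)))"
      proof (intro suminf_cong)
        fix k
        have "ennreal (c k y) * ennreal (1 / c k y) = 1"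
          using c_pos[of k y] by (simp add: ennreal_mult[symmetric] del: ennreal_mult)
        then show "u k y = ennreal (c k y) * (u k y * ennreal (1 / c k y))" by (simp add: mult_ac)
      qed
      then have "ennpow (\<Sum>k. u k y) r \<le> (\<Sum>k. ennreal (c k y) * ennpow (u k y * ennreal (1 / c k y)) r)"
        using jensen_sum[OF r _ c_sums[of y], of "\<lambda>k. u k y * ennreal (1 / c k y)"] c_pos[of _ y]
        by (simp add: less_imp_le)
      also have "\<dots> = (\<Sum>k. d k y * ennpow (u k y) r)"
      proof (intro suminf_cong)
        fix k
        have c0: "0 < c k y" by (rule c_pos)
        have "c k y * (1 / c k y) powr r = c k y powr (1 - r)"
        proof -
          have "c k y * (1 / c k y) powr r = c k y powr 1 * c k y powr (- r)"
            using c0 by (simp add: powr_minus_divide powr_divide)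
          also have "\<dots> = c k y powr (1 - r)" by (simp only: powr_add[symmetric]) simp
          finally show ?thesis .
        qed
        then have e2: "ennreal (c k y) * ennreal ((1 / c k y) powr r) = ennreal (c k y powr (1 - r))"
          using c0 by (simp add: ennreal_mult[symmetric] del: ennreal_mult)
        have "ennreal (c k y) * ennpow (u k y * ennreal (1 / c k y)) r =
            ennpow (u k y) r * (ennreal (c k y) * ennreal ((1 / c k y) powr r))"
          using c0 r by (simp add: ennpow_mult_ennreal mult_ac)
        then show "ennreal (c k y) * ennpow (u k y * ennreal (1 / c k y)) r = d k y * ennpow (u k y) r"
          unfolding e2 by (simp add: d_def mult_ac)
      qed
      finally show ?thesis .
    qed
    have a1: "AE x in M. Q x \<le> E n (\<lambda>y. \<Sum>k. d k y * (ennreal (v y) * ennpow (u k y) r)) x"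
      unfolding Q_def
    proof (rule E_mono)
      show "AE x in M. ennreal (v x) * ennpow (\<Sum>k. u k x) r \<le> (\<Sum>k. d k x * (ennreal (v x) * ennpow (u k x) r))"
      proof (rule AE_I2)
        fix x
        have "ennreal (v x) * ennpow (\<Sum>k. u k x) r \<le> ennreal (v x) * (\<Sum>k. d k x * ennpow (u k x) r)"
          by (intro mult_left_mono pw) auto
        then show "ennreal (v x) * ennpow (\<Sum>k. u k x) r \<le> (\<Sum>k. d k x * (ennreal (v x) * ennpow (u k x) r))"
          by (simp add: ennreal_suminf_cmult[symmetric] mult_ac del: ennreal_suminf_cmult)
      qed
    qed measurable
    have a2: "AE x in M. E n (\<lambda>y. \<Sum>k. d k y * (ennreal (v y) * ennpow (u k y) r)) x =
        (\<Sum>k. E n (\<lambda>y. d k y * (ennreal (v y) * ennpow (u k y) r)) x)"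
      by (rule E_suminf) measurable
    have a3: "AE x in M. \<forall>k. E n (\<lambda>y. d k y * (ennreal (v y) * ennpow (u k y) r)) x = d k x * P k x"
      unfolding AE_all_countable
    proof
      fix k
      show "AE x in M. E n (\<lambda>y. d k y * (ennreal (v y) * ennpow (u k y) r)) x = d k x * P k x"
        using E_prod[of "d k" n "\<lambda>y. ennreal (v y) * ennpow (u k y) r"] unfolding P_def
        by (auto elim: AE_mp)
    qed
    show ?thesis using a1 a2 a3
    proof eventually_elim
      case (elim x)
      show ?case
      proof
        assume Nfin: "N x < \<top>"
        define nn where "nn = enn2real (N x)"
        have nn0: "0 \<le> nn" by (simp add: nn_def)
        have Nx: "N x = ennreal nn" using Nfin by (simp add: nn_def less_top)
        have nk_fin: "Nk k x < \<top>" for k using NkN[of k x] Nfin by (rule le_less_trans)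
        define nk where "nk = (\<lambda>k. enn2real (Nk k x))"
        have Nkx: "Nk k x = ennreal (nk k)" for k using nk_fin[of k] by (simp add: nk_def less_top)
        have "Q x \<le> (\<Sum>k. d k x * P k x)" using elim by simp
        also have "\<dots> \<le> (\<Sum>k. ennreal ((nn + \<epsilon>) powr (r - 1) * nk k))"
        proof (rule suminf_le)
          fix k
          have "d k x * P k x = ennreal (c k x powr (1 - r) * nk k powr r)"
            unfolding PN Nkx d_def by (simp add: ennpow_ennreal nk_def ennreal_mult)
          also have "c k x = (nk k + \<epsilon> * (1/2)^Suc k) / (nn + \<epsilon>)"
            using Nfin by (simp add: c_def nk_def nn_def)
          also have "((nk k + \<epsilon> * (1/2)^Suc k) / (nn + \<epsilon>)) powr (1 - r) * nk k powr r \<le> (nn + \<epsilon>) powr (r - 1) * nk k"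
            by (rule weight_ineq) (use \<epsilon> nn0 r in \<open>auto simp: nk_def\<close>)
          finally show "d k x * P k x \<le> ennreal ((nn + \<epsilon>) powr (r - 1) * nk k)" by (simp add: ennreal_leI)
        qed auto
        also have "\<dots> = ennreal ((nn + \<epsilon>) powr (r - 1)) * N x"
          unfolding N_def Nkx by (simp add: ennreal_mult nk_def)
        also have "\<dots> = ennreal ((nn + \<epsilon>) powr (r - 1) * nn)" using Nx nn0 by (simp add: ennreal_mult)
        also have "\<dots> \<le> ennreal ((nn + \<epsilon>) powr r)"
        proof (rule ennreal_leI)
          have "(nn + \<epsilon>) powr (r - 1) * nn \<le> (nn + \<epsilon>) powr (r - 1) * (nn + \<epsilon>)"
            using \<epsilon> by (intro mult_left_mono) auto
          also have "\<dots> = (nn + \<epsilon>) powr r" using \<epsilon> nn0 by (simp add: powr_diff)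
          finally show "(nn + \<epsilon>) powr (r - 1) * nn \<le> (nn + \<epsilon>) powr r" .
        qed
        finally show "Q x \<le> ennreal ((enn2real (N x) + 1 / real (Suc m)) powr r)" by (simp add: nn_def \<epsilon>_def)
      qed
    qed
  qed
  then have "AE x in M. \<forall>m. N x < \<top> \<longrightarrow> Q x \<le> ennreal ((enn2real (N x) + 1 / real (Suc m)) powr r)"
    by (subst AE_all_countable) blast
  then show ?thesis
  proof eventually_elim
    case (elim x)
    show ?case
    proof (cases "N x < \<top>")
      case False
      then have "(\<Sum>k. ennpow (E n (\<lambda>y. ennreal (v y) * ennpow (u k y) r) x) (1/r)) = \<top>"
        by (simp add: N_def Nk_def P_def not_less top_unique)
      then show ?thesis by simp
    next
      case True
      have "Q x \<le> ennreal (enn2real (N x) powr r)"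
        by (rule limit_powr_le) (use elim True r in auto)
      then have "ennpow (Q x) (1/r) \<le> ennpow (ennreal (enn2real (N x) powr r)) (1/r)"
        using r by (intro ennpow_mono) auto
      also have "\<dots> = N x"
        using True r by (simp add: ennpow_ennreal powr_powr less_top)
      finally show ?thesis by (simp add: Q_def N_def Nk_def P_def)
    qed
  qed
qed

end


lemma ennpow_SUP:
  assumes e: "0 < e"
  shows "ennpow (SUP n. a n) e = (SUP n. ennpow (a n) e)"
proof (rule antisym)
  have "(SUP n. a n) \<le> ennpow (SUP n. ennpow (a n) e) (1/e)"
  proof (rule SUP_least)
    fix n
    have "a n = ennpow (ennpow (a n) e) (1/e)" using e by (simp add: ennpow_inv)
    also have "\<dots> \<le> ennpow (SUP n. ennpow (a n) e) (1/e)"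
      using e by (intro ennpow_mono SUP_upper) auto
    finally show "a n \<le> ennpow (SUP n. ennpow (a n) e) (1/e)" .
  qed
  then have "ennpow (SUP n. a n) e \<le> ennpow (ennpow (SUP n. ennpow (a n) e) (1/e)) e"
    using e by (intro ennpow_mono) auto
  also have "\<dots> = (SUP n. ennpow (a n) e)" using e by (simp add: ennpow_ennpow)
  finally show "ennpow (SUP n. a n) e \<le> (SUP n. ennpow (a n) e)" .
next
  show "(SUP n. ennpow (a n) e) \<le> ennpow (SUP n. a n) e"
    using e by (intro SUP_least ennpow_mono SUP_upper) auto
qed

context filt begin

definition Sop :: "('a \<Rightarrow> real) \<Rightarrow> real \<Rightarrow> ('a \<Rightarrow> ennreal) \<Rightarrow> 'a \<Rightarrow> ennreal" where
  "Sop v r u x = ennpow (SUP n. E n (\<lambda>y. ennreal (v y) * ennpow (u y) r) x) (1/r) * ennreal (v x powr (- 1/r))"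

lemma Sop_meas[measurable]:
  assumes "v \<in> borel_measurable M"
  shows "Sop v r u \<in> borel_measurable M"
  unfolding Sop_def using assms by measurable

lemma Sop_suminf:
  assumes r: "1 \<le> r" and [measurable]: "v \<in> borel_measurable M" "\<And>k. u k \<in> borel_measurable M"
  shows "AE x in M. Sop v r (\<lambda>y. \<Sum>k. u k y) x \<le> (\<Sum>k. Sop v r (u k) x)"
proof -
  have "AE x in M. \<forall>n. ennpow (E n (\<lambda>y. ennreal (v y) * ennpow (\<Sum>k. u k y) r) x) (1/r)
      \<le> (\<Sum>k. ennpow (E n (\<lambda>y. ennreal (v y) * ennpow (u k y) r) x) (1/r))"
    unfolding AE_all_countable using cond_mink[OF r] by auto
  then show ?thesis
  proof eventually_elim
    case (elim x)
    have r0: "0 < 1/r" using r by simp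
    have "Sop v r (\<lambda>y. \<Sum>k. u k y) x = (SUP n. ennpow (E n (\<lambda>y. ennreal (v y) * ennpow (\<Sum>k. u k y) r) x) (1/r)) * ennreal (v x powr (- 1/r))"
      unfolding Sop_def by (simp add: ennpow_SUP[OF r0])
    also have "\<dots> \<le> (SUP n. (\<Sum>k. ennpow (E n (\<lambda>y. ennreal (v y) * ennpow (u k y) r) x) (1/r))) * ennreal (v x powr (- 1/r))"
      by (intro mult_right_mono SUP_mono) (use elim in auto)
    also have "\<dots> \<le> (\<Sum>k. (SUP n. ennpow (E n (\<lambda>y. ennreal (v y) * ennpow (u k y) r) x) (1/r))) * ennreal (v x powr (- 1/r))"
      by (intro mult_right_mono SUP_least suminf_le SUP_upper) auto
    also have "\<dots> = (\<Sum>k. Sop v r (u k) x)"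
      unfolding Sop_def by (simp add: ennpow_SUP[OF r0] ennreal_suminf_multc)
    finally show ?case .
  qed
qed

lemma Sop_cmult:
  assumes r: "1 \<le> r" and [measurable]: "v \<in> borel_measurable M" "u \<in> borel_measurable M" and c: "0 \<le> c"
  shows "AE x in M. Sop v r (\<lambda>y. ennreal c * u y) x = ennreal c * Sop v r u x"
proof -
  have "AE x in M. \<forall>n. E n (\<lambda>y. ennreal (v y) * ennpow (ennreal c * u y) r) x = ennreal (c powr r) * E n (\<lambda>y. ennreal (v y) * ennpow (u y) r) x"
    unfolding AE_all_countable
  proof
    fix n
    have "(\<lambda>y. ennreal (v y) * ennpow (ennreal c * u y) r) = (\<lambda>y. ennreal (c powr r) * (ennreal (v y) * ennpow (u y) r))"
      using r c by (auto simp: ennpow_mult ennpow_ennreal mult_ac)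
    then show "AE x in M. E n (\<lambda>y. ennreal (v y) * ennpow (ennreal c * u y) r) x = ennreal (c powr r) * E n (\<lambda>y. ennreal (v y) * ennpow (u y) r) x"
      using E_cmult[of "\<lambda>y. ennreal (v y) * ennpow (u y) r" n "ennreal (c powr r)"] by simp
  qed
  then show ?thesis
  proof eventually_elim
    case (elim x)
    have r0: "0 < 1/r" using r by simp
    have "Sop v r (\<lambda>y. ennreal c * u y) x = ennpow (ennreal (c powr r) * (SUP n. E n (\<lambda>y. ennreal (v y) * ennpow (u y) r) x)) (1/r) * ennreal (v x powr (- 1/r))"
      unfolding Sop_def by (simp add: elim SUP_mult_left_ennreal)
    also have "\<dots> = ennreal c * Sop v r u x"
      using r c r0 by (simp add: Sop_def ennpow_mult ennpow_ennreal powr_powr mult_ac)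
    finally show ?case .
  qed
qed

lemma Sop_A1:
  assumes r: "1 \<le> r" and [measurable]: "v \<in> borel_measurable M" "U \<in> borel_measurable M"
    and vpos: "\<And>x. x \<in> space M \<Longrightarrow> 0 < v x" and K: "0 \<le> K"
    and bd: "AE x in M. Sop v r U x \<le> ennreal K * U x"
  shows "AE x in M. E n (\<lambda>y. ennreal (v y) * ennpow (U y) r) x \<le> ennreal (K powr r) * (ennreal (v x) * ennpow (U x) r)"
  using bd AE_space
proof eventually_elim
  case (elim x)
  have v0: "0 < v x" using vpos elim by simp
  have r0: "0 < 1/r" using r by simp
  have one: "ennreal (v x powr (- 1/r)) * ennreal (v x powr (1/r)) = 1"
    using v0 by (simp add: ennreal_mult[symmetric] powr_add[symmetric] del: ennreal_mult)
  have "ennpow (SUP n. E n (\<lambda>y. ennreal (v y) * ennpow (U y) r) x) (1/r)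
      = Sop v r U x * ennreal (v x powr (1/r))"
    unfolding Sop_def mult.assoc one by simp
  also have "\<dots> \<le> ennreal K * U x * ennreal (v x powr (1/r))"
    by (intro mult_right_mono elim) auto
  finally have "ennpow (ennpow (SUP n. E n (\<lambda>y. ennreal (v y) * ennpow (U y) r) x) (1/r)) r
      \<le> ennpow (ennreal K * U x * ennreal (v x powr (1/r))) r"
    using r by (intro ennpow_mono) auto
  then have "(SUP n. E n (\<lambda>y. ennreal (v y) * ennpow (U y) r) x) \<le> ennreal (K powr r) * (ennreal (v x) * ennpow (U x) r)"
    using r K v0 by (simp add: ennpow_ennpow ennpow_mult ennpow_ennreal powr_powr mult_ac)
  then show ?case by (rule order_trans[rotated]) (rule SUP_upper, simp)
qed

end


locale wsetup = filt +
  fixes w :: "'a \<Rightarrow> real" and p A :: real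
  assumes w_meas[measurable]: "w \<in> borel_measurable M"
    and wpos: "\<And>x. x \<in> space M \<Longrightarrow> 0 < w x"
    and p: "1 < p" and A: "0 < A"
    and Ap: "\<And>n. AE x in M. E n (\<lambda>y. ennreal (w y)) x * ennpow (E n (\<lambda>y. ennreal (w y powr (1/(1-p))))  x) (p-1) \<le> ennreal A"
begin

definition "p' = p / (p - 1)"
definition "cc = max 1 (1 / (p - 1))"
definition "aa = cc * (p - 1)"
definition "rr = cc * p"
definition "\<sigma> = (\<lambda>y. w y powr (1/(1-p)))"
definition "v1 = (\<lambda>y. w y powr (1/p))"
definition "v2 = (\<lambda>y. w y powr (- 1/p))"
definition "KK = kd p * kd p'"

lemma p'1: "1 < p'" using p by (simp add: p'_def)
lemma cc1: "1 \<le> cc" by (simp add: cc_def)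
lemma aa1: "1 \<le> aa"
proof (cases "1 \<le> 1 / (p - 1)")
  case True then show ?thesis using p by (simp add: aa_def cc_def max_def)
next
  case False
  then have "1 / (p - 1) < 1" by simp
  then have "1 < p - 1" using p by (simp add: field_simps)
  then show ?thesis using p False by (simp add: aa_def cc_def max_def)
qed
lemma rr_aa: "rr = aa * p'" using p by (simp add: rr_def aa_def p'_def)
lemma rr_pos: "0 < rr" using p cc1 by (simp add: rr_def)
lemma KK_pos: "0 < KK" using p p'1 by (simp add: KK_def kd_pos)

lemma \<sigma>_meas[measurable]: "\<sigma> \<in> borel_measurable M" unfolding \<sigma>_def by measurable
lemma v1_meas[measurable]: "v1 \<in> borel_measurable M" unfolding v1_def by measurable
lemma v2_meas[measurable]: "v2 \<in> borel_measurable M" unfolding v2_def by measurable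
lemma \<sigma>pos: "x \<in> space M \<Longrightarrow> 0 < \<sigma> x" using wpos[of x] by (simp add: \<sigma>_def less_imp_neq[symmetric])
lemma v1pos: "x \<in> space M \<Longrightarrow> 0 < v1 x" using wpos[of x] by (simp add: v1_def less_imp_neq[symmetric])
lemma v2pos: "x \<in> space M \<Longrightarrow> 0 < v2 x" using wpos[of x] by (simp add: v2_def less_imp_neq[symmetric])

lemma norm_S2:
  assumes [measurable]: "u \<in> borel_measurable M"
  shows "(\<integral>\<^sup>+x. ennpow (Sop v2 cc u x) rr \<partial>M) \<le> ennreal (KK * A powr p') * (\<integral>\<^sup>+x. ennpow (u x) rr \<partial>M)"
proof -
  define f where "f = (\<lambda>y. ennreal (v2 y) * ennpow (u y) cc)"
  have [measurable]: "f \<in> borel_measurable M" unfolding f_def by measurable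
  have L: "(\<integral>\<^sup>+x. ennpow (SUP n. E n f x) p * ennreal (w x) \<partial>M)
     \<le> ennreal (kd p * kd (p/(p-1)) * A powr (p/(p-1))) * (\<integral>\<^sup>+x. ennpow (f x) p * ennreal (w x) \<partial>M)"
    by (rule lerner) (use wpos p A Ap in auto)
  have e1: "(\<integral>\<^sup>+x. ennpow (Sop v2 cc u x) rr \<partial>M) = (\<integral>\<^sup>+x. ennpow (SUP n. E n f x) p * ennreal (w x) \<partial>M)"
  proof (rule nn_integral_cong)
    fix x assume x: "x \<in> space M"
    have "ennpow (Sop v2 cc u x) rr = ennpow (SUP n. E n f x) ((1/cc) * rr) * ennreal ((v2 x powr (- 1/cc)) powr rr)"
      unfolding Sop_def f_def using cc1 rr_pos by (simp add: ennpow_mult ennpow_ennpow ennpow_ennreal)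
    also have "(1/cc) * rr = p" using cc1 by (simp add: rr_def)
    also have "(v2 x powr (- 1/cc)) powr rr = w x"
      using wpos[OF x] cc1 p by (simp add: v2_def powr_powr rr_def)
    finally show "ennpow (Sop v2 cc u x) rr = ennpow (SUP n. E n f x) p * ennreal (w x)" .
  qed
  have e2: "(\<integral>\<^sup>+x. ennpow (f x) p * ennreal (w x) \<partial>M) = (\<integral>\<^sup>+x. ennpow (u x) rr \<partial>M)"
  proof (rule nn_integral_cong)
    fix x assume x: "x \<in> space M"
    have "ennpow (f x) p * ennreal (w x) = ennpow (u x) (cc * p) * ennreal (v2 x powr p * w x)"
      unfolding f_def using cc1 p v2pos[OF x] wpos[OF x]
      by (simp add: ennpow_mult ennpow_ennpow ennpow_ennreal ennreal_mult mult_ac)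
    also have "v2 x powr p * w x = 1"
    proof -
      have "v2 x powr p * w x = w x powr (- 1/p * p + 1)"
        using wpos[OF x] by (simp add: v2_def powr_powr powr_add)
      also have "- 1/p * p + 1 = 0" using p by simp
      finally show ?thesis using wpos[OF x] by simp
    qed
    finally show "ennpow (f x) p * ennreal (w x) = ennpow (u x) rr" by (simp add: rr_def)
  qed
  show ?thesis using L unfolding e1 e2 by (simp add: KK_def p'_def)
qed

lemma Ap_\<sigma>: "AE x in M. E n (\<lambda>y. ennreal (\<sigma> y)) x * ennpow (E n (\<lambda>y. ennreal (\<sigma> y powr (1/(1-p')))) x) (p'-1)
   \<le> ennreal (A powr (1/(p-1)))"
proof -
  have "AE x in M. E n (\<lambda>y. ennreal (\<sigma> y powr (1/(1-p')))) x = E n (\<lambda>y. ennreal (w y)) x"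
  proof (rule E_cong)
    show "AE x in M. ennreal (\<sigma> x powr (1/(1-p'))) = ennreal (w x)"
    proof (rule AE_I2)
      fix x assume x: "x \<in> space M"
      have "1/(1-p) * (1/(1-p')) = 1" using p by (simp add: p'_def field_simps)
      then show "ennreal (\<sigma> x powr (1/(1-p'))) = ennreal (w x)"
        using wpos[OF x] by (simp add: \<sigma>_def powr_powr)
    qed
  qed measurable
  then show ?thesis using Ap[of n]
  proof eventually_elim
    case (elim x)
    have pp: "p' - 1 = 1/(p-1)" using p by (simp add: p'_def field_simps)
    have "E n (\<lambda>y. ennreal (\<sigma> y)) x * ennpow (E n (\<lambda>y. ennreal (\<sigma> y powr (1/(1-p')))) x) (p'-1)
        = ennpow (E n (\<lambda>y. ennreal (w y)) x * ennpow (E n (\<lambda>y. ennreal (\<sigma> y)) x) (p-1)) (1/(p-1))"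
      using p unfolding elim pp by (simp add: ennpow_mult ennpow_ennpow mult.commute \<sigma>_def)
    also have "\<dots> \<le> ennpow (ennreal A) (1/(p-1))"
      using p elim by (intro ennpow_mono) (auto simp: \<sigma>_def)
    finally show ?case using A by (simp add: ennpow_ennreal)
  qed
qed

lemma norm_S1:
  assumes [measurable]: "u \<in> borel_measurable M"
  shows "(\<integral>\<^sup>+x. ennpow (Sop v1 aa u x) rr \<partial>M) \<le> ennreal (KK * A powr p') * (\<integral>\<^sup>+x. ennpow (u x) rr \<partial>M)"
proof -
  define f where "f = (\<lambda>y. ennreal (v1 y) * ennpow (u y) aa)"
  have [measurable]: "f \<in> borel_measurable M" unfolding f_def by measurable
  have L: "(\<integral>\<^sup>+x. ennpow (SUP n. E n f x) p' * ennreal (\<sigma> x) \<partial>M)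
     \<le> ennreal (kd p' * kd (p'/(p'-1)) * (A powr (1/(p-1))) powr (p'/(p'-1))) * (\<integral>\<^sup>+x. ennpow (f x) p' * ennreal (\<sigma> x) \<partial>M)"
    by (rule lerner) (use \<sigma>pos p'1 A Ap_\<sigma> in auto)
  have pp: "p'/(p'-1) = p" using p by (simp add: p'_def field_simps)
  have cst: "kd p' * kd (p'/(p'-1)) * (A powr (1/(p-1))) powr (p'/(p'-1)) = KK * A powr p'"
    unfolding pp using A p by (simp add: KK_def powr_powr p'_def)
  have e1: "(\<integral>\<^sup>+x. ennpow (Sop v1 aa u x) rr \<partial>M) = (\<integral>\<^sup>+x. ennpow (SUP n. E n f x) p' * ennreal (\<sigma> x) \<partial>M)"
  proof (rule nn_integral_cong)
    fix x assume x: "x \<in> space M"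
    have "ennpow (Sop v1 aa u x) rr = ennpow (SUP n. E n f x) ((1/aa) * rr) * ennreal ((v1 x powr (- 1/aa)) powr rr)"
      unfolding Sop_def f_def using aa1 rr_pos by (simp add: ennpow_mult ennpow_ennpow ennpow_ennreal)
    also have "(1/aa) * rr = p'" using aa1 by (simp add: rr_aa)
    also have "(v1 x powr (- 1/aa)) powr rr = \<sigma> x"
    proof -
      have "1/p * (- 1/aa) * rr = 1/(1-p)" using aa1 p by (simp add: rr_aa p'_def field_simps)
      then show ?thesis using wpos[OF x] by (simp add: v1_def \<sigma>_def powr_powr)
    qed
    finally show "ennpow (Sop v1 aa u x) rr = ennpow (SUP n. E n f x) p' * ennreal (\<sigma> x)" .
  qed
  have e2: "(\<integral>\<^sup>+x. ennpow (f x) p' * ennreal (\<sigma> x) \<partial>M) = (\<integral>\<^sup>+x. ennpow (u x) rr \<partial>M)"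
  proof (rule nn_integral_cong)
    fix x assume x: "x \<in> space M"
    have "ennpow (f x) p' * ennreal (\<sigma> x) = ennpow (u x) (aa * p') * ennreal (v1 x powr p' * \<sigma> x)"
      unfolding f_def using aa1 p'1 v1pos[OF x] \<sigma>pos[OF x]
      by (simp add: ennpow_mult ennpow_ennpow ennpow_ennreal ennreal_mult mult_ac)
    also have "v1 x powr p' * \<sigma> x = 1"
    proof -
      have "v1 x powr p' * \<sigma> x = w x powr (1/p * p' + 1/(1-p))"
        using wpos[OF x] by (simp add: v1_def \<sigma>_def powr_powr powr_add)
      also have "1/p * p' + 1/(1-p) = 0" using p by (simp add: p'_def field_simps)
      finally show ?thesis using wpos[OF x] by simp
    qed
    finally show "ennpow (f x) p' * ennreal (\<sigma> x) = ennpow (u x) rr" by (simp add: rr_aa)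
  qed
  show ?thesis using L unfolding e1 e2 cst .
qed

definition Sf :: "('a \<Rightarrow> ennreal) \<Rightarrow> 'a \<Rightarrow> ennreal" where
  "Sf u x = Sop v1 aa u x + Sop v2 cc u x"

definition "\<beta> = 2 powr rr * (2 * (KK * A powr p'))"

lemma beta_pos: "0 < \<beta>" using KK_pos A by (simp add: \<beta>_def)

lemma Sf_meas[measurable]: "Sf u \<in> borel_measurable M"
  unfolding Sf_def by measurable

lemma norm_Sf:
  assumes [measurable]: "u \<in> borel_measurable M"
  shows "(\<integral>\<^sup>+x. ennpow (Sf u x) rr \<partial>M) \<le> ennreal \<beta> * (\<integral>\<^sup>+x. ennpow (u x) rr \<partial>M)"
proof -
  have "(\<integral>\<^sup>+x. ennpow (Sf u x) rr \<partial>M) \<le>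
      (\<integral>\<^sup>+x. ennreal (2 powr rr) * (ennpow (Sop v1 aa u x) rr + ennpow (Sop v2 cc u x) rr) \<partial>M)"
    unfolding Sf_def by (intro nn_integral_mono ennpow_sum_le rr_pos)
  also have "\<dots> = ennreal (2 powr rr) * ((\<integral>\<^sup>+x. ennpow (Sop v1 aa u x) rr \<partial>M) + (\<integral>\<^sup>+x. ennpow (Sop v2 cc u x) rr \<partial>M))"
    by (simp add: nn_integral_cmult nn_integral_add)
  also have "\<dots> \<le> ennreal (2 powr rr) * (ennreal (KK * A powr p') * (\<integral>\<^sup>+x. ennpow (u x) rr \<partial>M) +
      ennreal (KK * A powr p') * (\<integral>\<^sup>+x. ennpow (u x) rr \<partial>M))"
    by (intro mult_left_mono add_mono norm_S1 norm_S2) auto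
  also have "\<dots> = ennreal (2 powr rr) * (2 * (ennreal (KK * A powr p') * (\<integral>\<^sup>+x. ennpow (u x) rr \<partial>M)))"
    by (simp only: mult_2)
  also have "\<dots> = ennreal \<beta> * (\<integral>\<^sup>+x. ennpow (u x) rr \<partial>M)"
    using KK_pos A unfolding \<beta>_def by (simp add: ennreal_mult mult.assoc)
  finally show ?thesis .
qed

end


lemma powr_power_nat: fixes x r :: real assumes "0 \<le> x" shows "(x ^ k) powr r = (x powr r) ^ k"
proof (induction k)
  case (Suc k)
  have "(x * x^k) powr r = x powr r * (x^k) powr r" by (rule powr_mult)
  then show ?case by (simp add: Suc)
qed simp

lemma ennreal_suminf_Suc_le: "(\<Sum>n. (f::nat \<Rightarrow> ennreal) (Suc n)) \<le> (\<Sum>n. f n)"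
proof -
  have "f sums ((\<Sum>n. f (Suc n)) + f 0)"
    by (rule sums_Suc) (rule summable_sums[OF summableI])
  then have "(\<Sum>n. f n) = (\<Sum>n. f (Suc n)) + f 0" by (rule sums_unique[symmetric])
  then show ?thesis by simp
qed

context wsetup begin

definition "BB = \<beta> powr (1/rr)"
definition "\<gamma> k = (1 / (2 * BB)) ^ k"

lemma rr1: "1 \<le> rr"
proof -
  have "1 * 1 \<le> aa * p'" using aa1 p'1 by (intro mult_mono) auto
  then show ?thesis by (simp add: rr_aa)
qed

lemma BB_pos: "0 < BB" using beta_pos by (simp add: BB_def)

lemma BB_rr: "BB powr rr = \<beta>" using beta_pos rr_pos by (simp add: BB_def powr_powr)

definition it :: "('a \<Rightarrow> ennreal) \<Rightarrow> nat \<Rightarrow> 'a \<Rightarrow> ennreal" where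
  "it u0 k = (Sf ^^ k) u0"

lemma it_0[simp]: "it u0 0 = u0" by (simp add: it_def)
lemma it_Suc: "it u0 (Suc k) = Sf (it u0 k)" by (simp add: it_def)

lemma it_meas[measurable]: "u0 \<in> borel_measurable M \<Longrightarrow> it u0 k \<in> borel_measurable M"
  by (induction k) (simp_all add: it_Suc)

lemma norm_it:
  assumes [measurable]: "u0 \<in> borel_measurable M"
  shows "(\<integral>\<^sup>+x. ennpow (it u0 k x) rr \<partial>M) \<le> ennreal (\<beta> ^ k) * (\<integral>\<^sup>+x. ennpow (u0 x) rr \<partial>M)"
proof (induction k)
  case 0 then show ?case by simp
next
  case (Suc k)
  have "(\<integral>\<^sup>+x. ennpow (it u0 (Suc k) x) rr \<partial>M) \<le> ennreal \<beta> * (\<integral>\<^sup>+x. ennpow (it u0 k x) rr \<partial>M)"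
    unfolding it_Suc by (rule norm_Sf) simp
  also have "\<dots> \<le> ennreal \<beta> * (ennreal (\<beta> ^ k) * (\<integral>\<^sup>+x. ennpow (u0 x) rr \<partial>M))"
    by (intro mult_left_mono Suc) auto
  also have "\<dots> = ennreal (\<beta> ^ Suc k) * (\<integral>\<^sup>+x. ennpow (u0 x) rr \<partial>M)"
    using beta_pos by (simp add: ennreal_mult mult.assoc)
  finally show ?case .
qed

definition UU :: "('a \<Rightarrow> ennreal) \<Rightarrow> 'a \<Rightarrow> ennreal" where
  "UU u0 x = (\<Sum>k. ennreal (\<gamma> k) * it u0 k x)"

lemma UU_meas[measurable]: "u0 \<in> borel_measurable M \<Longrightarrow> UU u0 \<in> borel_measurable M"
  unfolding UU_def by measurable

lemma UU_ge: "u0 x \<le> UU u0 x"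
  using ennreal_le_suminf[of "\<lambda>k. ennreal (\<gamma> k) * it u0 k x" 0] by (simp add: UU_def \<gamma>_def)

lemma gamma_Suc: "\<gamma> k = 2 * BB * \<gamma> (Suc k)"
  using BB_pos by (simp add: \<gamma>_def)

lemma UU_bound:
  assumes [measurable]: "u0 \<in> borel_measurable M"
  shows "AE x in M. Sf (UU u0) x \<le> ennreal (2 * BB) * UU u0 x"
proof -
  have g0: "0 \<le> \<gamma> k" for k using BB_pos by (simp add: \<gamma>_def)
  have s1: "AE x in M. Sop v1 aa (UU u0) x \<le> (\<Sum>k. Sop v1 aa (\<lambda>y. ennreal (\<gamma> k) * it u0 k y) x)"
    unfolding UU_def by (rule Sop_suminf) (use aa1 in auto)
  have s2: "AE x in M. Sop v2 cc (UU u0) x \<le> (\<Sum>k. Sop v2 cc (\<lambda>y. ennreal (\<gamma> k) * it u0 k y) x)"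
    unfolding UU_def by (rule Sop_suminf) (use cc1 in auto)
  have h1: "AE x in M. \<forall>k. Sop v1 aa (\<lambda>y. ennreal (\<gamma> k) * it u0 k y) x = ennreal (\<gamma> k) * Sop v1 aa (it u0 k) x"
    unfolding AE_all_countable by (intro allI Sop_cmult) (use aa1 g0 in auto)
  have h2: "AE x in M. \<forall>k. Sop v2 cc (\<lambda>y. ennreal (\<gamma> k) * it u0 k y) x = ennreal (\<gamma> k) * Sop v2 cc (it u0 k) x"
    unfolding AE_all_countable by (intro allI Sop_cmult) (use cc1 g0 in auto)
  show ?thesis using s1 s2 h1 h2
  proof eventually_elim
    case (elim x)
    have "Sf (UU u0) x \<le> (\<Sum>k. ennreal (\<gamma> k) * Sop v1 aa (it u0 k) x) + (\<Sum>k. ennreal (\<gamma> k) * Sop v2 cc (it u0 k) x)"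
      unfolding Sf_def using elim by (intro add_mono) auto
    also have "\<dots> = (\<Sum>k. ennreal (\<gamma> k) * Sop v1 aa (it u0 k) x + ennreal (\<gamma> k) * Sop v2 cc (it u0 k) x)"
      by (rule suminf_add[OF summableI summableI])
    also have "\<dots> = (\<Sum>k. ennreal (\<gamma> k) * it u0 (Suc k) x)"
      by (rule suminf_cong) (simp only: it_Suc Sf_def distrib_left)
    also have "\<dots> = ennreal (2 * BB) * (\<Sum>k. ennreal (\<gamma> (Suc k)) * it u0 (Suc k) x)"
    proof -
      have e: "ennreal (\<gamma> k) = ennreal (2 * BB) * ennreal (\<gamma> (Suc k))" for k
        using BB_pos g0[of "Suc k"] gamma_Suc[of k] by (simp add: ennreal_mult[symmetric] del: ennreal_mult)
      have "(\<Sum>k. ennreal (\<gamma> k) * it u0 (Suc k) x) = (\<Sum>k. ennreal (2 * BB) * (ennreal (\<gamma> (Suc k)) * it u0 (Suc k) x))"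
        by (rule suminf_cong, subst e, simp only: mult.assoc)
      then show ?thesis by (simp only: ennreal_suminf_cmult)
    qed
    also have "\<dots> \<le> ennreal (2 * BB) * UU u0 x"
      unfolding UU_def by (rule mult_left_mono[OF ennreal_suminf_Suc_le[where f = "\<lambda>k. ennreal (\<gamma> k) * it u0 k x"]]) simp
    finally show ?case .
  qed
qed

lemma UU_fin:
  assumes [measurable]: "u0 \<in> borel_measurable M" and I: "(\<integral>\<^sup>+x. ennpow (u0 x) rr \<partial>M) < \<top>"
  shows "AE x in M. UU u0 x < \<top>"
proof -
  define t where "t = (\<lambda>k x. ennreal (\<gamma> k) * it u0 k x)"
  define G where "G = (\<lambda>x. \<Sum>k. ennreal ((1/2)^k) * ennpow (ennreal (2^k) * t k x) rr)"
  have [measurable]: "G \<in> borel_measurable M" unfolding G_def t_def by measurable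
  have "(\<integral>\<^sup>+x. G x \<partial>M) = (\<Sum>k. ennreal ((1/2)^k) * (\<integral>\<^sup>+x. ennpow (ennreal (2^k) * t k x) rr \<partial>M))"
    unfolding G_def by (subst nn_integral_suminf) (auto simp: t_def nn_integral_cmult)
  also have "\<dots> \<le> (\<Sum>k. ennreal ((1/2)^k) * (\<integral>\<^sup>+x. ennpow (u0 x) rr \<partial>M))"
  proof (intro suminf_le mult_left_mono)
    fix k
    have e: "(2^k * \<gamma> k) powr rr * \<beta> ^ k = 1"
    proof -
      have "2^k * \<gamma> k = (1 / BB) ^ k" using BB_pos by (simp add: \<gamma>_def power_divide)
      then have "(2^k * \<gamma> k) powr rr = ((1/BB) powr rr) ^ k" using BB_pos by (simp add: powr_power_nat)
      also have "(1/BB) powr rr = 1 / \<beta>" using BB_pos by (simp add: powr_divide BB_rr)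
      finally show ?thesis using beta_pos by (simp add: power_one_over)
    qed
    have "(\<integral>\<^sup>+x. ennpow (ennreal (2^k) * t k x) rr \<partial>M) = ennreal ((2^k * \<gamma> k) powr rr) * (\<integral>\<^sup>+x. ennpow (it u0 k x) rr \<partial>M)"
      unfolding t_def using rr_pos BB_pos
      by (subst nn_integral_cmult[symmetric]) (auto intro!: nn_integral_cong simp: mult.assoc[symmetric] ennreal_mult[symmetric] ennpow_mult ennpow_ennreal \<gamma>_def simp del: ennreal_mult)
    also have "\<dots> \<le> ennreal ((2^k * \<gamma> k) powr rr) * (ennreal (\<beta> ^ k) * (\<integral>\<^sup>+x. ennpow (u0 x) rr \<partial>M))"
      by (intro mult_left_mono norm_it) auto
    also have "\<dots> = (\<integral>\<^sup>+x. ennpow (u0 x) rr \<partial>M)"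
      using e beta_pos by (simp add: mult.assoc[symmetric] ennreal_mult[symmetric] del: ennreal_mult)
    finally show "(\<integral>\<^sup>+x. ennpow (ennreal (2^k) * t k x) rr \<partial>M) \<le> (\<integral>\<^sup>+x. ennpow (u0 x) rr \<partial>M)" .
  qed auto
  also have "\<dots> = ennreal 2 * (\<integral>\<^sup>+x. ennpow (u0 x) rr \<partial>M)"
  proof -
    have "(\<Sum>k. ennreal ((1/2)^k)) = ennreal 2"
      by (rule suminf_ennreal_eq) (use geometric_sums[of "1/2::real"] in auto)
    then show ?thesis by (simp add: ennreal_suminf_multc)
  qed
  also have "\<dots> < \<top>" using I by (simp add: ennreal_mult_less_top)
  finally have "AE x in M. G x \<noteq> \<top>"
    using nn_integral_noteq_infinite[of G M] by (simp add: top.not_eq_extremum)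
  then show ?thesis
  proof eventually_elim
    case (elim x)
    have "UU u0 x = (\<Sum>k. ennreal ((1/2)^k) * (ennreal (2^k) * t k x))"
      unfolding UU_def t_def
    proof (rule suminf_cong)
      fix k
      have "ennreal ((1/2)^k) * ennreal (2^k) = 1"
        by (simp add: ennreal_mult[symmetric] power_mult_distrib[symmetric] del: ennreal_mult)
      then show "ennreal (\<gamma> k) * it u0 k x = ennreal ((1/2)^k) * (ennreal (2^k) * (ennreal (\<gamma> k) * it u0 k x))"
        by (simp only: mult.assoc[symmetric]) simp
    qed
    also have "\<dots> \<le> (\<Sum>k. ennreal ((1/2)^k) * (1 + ennpow (ennreal (2^k) * t k x) rr))"
      using rr1 by (intro suminf_le mult_left_mono ennpow_le_1_plus) auto
    also have "\<dots> = (\<Sum>k. ennreal ((1/2)^k) + ennreal ((1/2)^k) * ennpow (ennreal (2^k) * t k x) rr)"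
      by (simp only: distrib_left mult_1_right)
    also have "\<dots> = (\<Sum>k. ennreal ((1/2)^k)) + G x"
      unfolding G_def by (rule suminf_add[OF summableI summableI, symmetric])
    also have "(\<Sum>k. ennreal ((1/2)^k)) = ennreal 2"
      by (rule suminf_ennreal_eq) (use geometric_sums[of "1/2::real"] in auto)
    finally show ?case using elim by (simp add: top.not_eq_extremum le_less_trans)
  qed
qed

end


definition "gcc p = max 1 (1 / (p - 1))"
definition "gaa p = gcc p * (p - 1)"
definition "grr p = gcc p * p"
definition "gp' p = p / (p - 1)"
definition "gQ p = 2 powr grr p * 2 * (kd p * kd (gp' p))"
definition "C1 p = 2 powr gaa p * gQ p powr (gaa p / grr p)"
definition "C2 p = 2 powr gcc p * gQ p powr (gcc p / grr p)"

lemma gQ_pos: "1 < p \<Longrightarrow> 0 < gQ p"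
  by (simp add: gQ_def gp'_def kd_pos)
lemma C1_pos: "1 < p \<Longrightarrow> 0 < C1 p" using gQ_pos[of p] by (simp add: C1_def)
lemma C2_pos: "1 < p \<Longrightarrow> 0 < C2 p" using gQ_pos[of p] by (simp add: C2_def)

context wsetup begin

lemma g_eqs: "cc = gcc p" "aa = gaa p" "rr = grr p" "p' = gp' p" "2 powr rr * 2 * KK = gQ p"
  by (simp_all add: cc_def gcc_def aa_def gaa_def rr_def grr_def p'_def gp'_def gQ_def KK_def)

lemma Q_pos: "0 < gQ p" using KK_pos by (simp flip: g_eqs)

lemma BB_aa: "(2 * BB) powr aa = C1 p * A"
proof -
  have "\<beta> = gQ p * A powr p'" by (simp add: \<beta>_def flip: g_eqs(5))
  then have "(2 * BB) powr aa = 2 powr aa * (gQ p powr (1/rr * aa) * A powr (p' * (1/rr) * aa))"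
    using A Q_pos by (simp add: BB_def powr_mult powr_powr)
  also have "p' * (1/rr) * aa = 1" using aa1 p'1 by (simp add: rr_aa)
  finally show ?thesis using A by (simp add: C1_def flip: g_eqs)
qed

lemma BB_cc: "(2 * BB) powr cc = C2 p * A powr (1/(p-1))"
proof -
  have "\<beta> = gQ p * A powr p'" by (simp add: \<beta>_def flip: g_eqs(5))
  then have "(2 * BB) powr cc = 2 powr cc * (gQ p powr (1/rr * cc) * A powr (p' * (1/rr) * cc))"
    using A Q_pos by (simp add: BB_def powr_mult powr_powr)
  also have "p' * (1/rr) * cc = 1/(p-1)" using p cc1 by (simp add: rr_def p'_def field_simps)
  finally show ?thesis using A by (simp add: C2_def flip: g_eqs)
qed

lemma pre_factor:
  obtains W1 W2 :: "'a \<Rightarrow> real" where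
    "W1 \<in> borel_measurable M" "W2 \<in> borel_measurable M"
    "\<And>x. x \<in> space M \<Longrightarrow> 0 < W1 x" "\<And>x. x \<in> space M \<Longrightarrow> 0 < W2 x"
    "\<And>x. x \<in> space M \<Longrightarrow> W1 x * W2 x powr (1-p) = w x"
    "\<And>n. AE x in M. E n (\<lambda>y. ennreal (W1 y)) x \<le> ennreal ((2*BB) powr aa) * ennreal (W1 x)"
    "\<And>n. AE x in M. E n (\<lambda>y. ennreal (W2 y)) x \<le> ennreal ((2*BB) powr cc) * ennreal (W2 x)"
proof -
  interpret sfM: sigma_finite_measure M by (rule sfm)
  obtain h0 :: "'a \<Rightarrow> real" where h0[measurable]: "h0 \<in> borel_measurable M" and h0pos: "\<And>x. 0 < h0 x"
    and "\<And>x. h0 x \<le> 1" and h0int: "integrable M h0"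
    by (rule sfM.obtain_positive_integrable_function) blast
  define u0 where "u0 = (\<lambda>x. ennreal (h0 x powr (1/rr)))"
  have [measurable]: "u0 \<in> borel_measurable M" unfolding u0_def by measurable
  have "(\<integral>\<^sup>+x. ennpow (u0 x) rr \<partial>M) = (\<integral>\<^sup>+x. ennreal (h0 x) \<partial>M)"
  proof (rule nn_integral_cong)
    fix x
    show "ennpow (u0 x) rr = ennreal (h0 x)"
      using h0pos[of x] rr_pos by (simp add: u0_def ennpow_ennreal powr_powr)
  qed
  also have "\<dots> < \<top>" using integrableD(2)[OF h0int] by (simp add: top.not_eq_extremum)
  finally have I: "(\<integral>\<^sup>+x. ennpow (u0 x) rr \<partial>M) < \<top>" .
  define U where "U = UU u0"
  have [measurable]: "U \<in> borel_measurable M" unfolding U_def by measurable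
  have Ufin: "AE x in M. U x < \<top>" unfolding U_def by (rule UU_fin) (use I in auto)
  have Ubd: "AE x in M. Sf U x \<le> ennreal (2 * BB) * U x" unfolding U_def by (rule UU_bound) simp
  have Upos: "0 < U x" for x
  proof -
    have "0 < u0 x" using h0pos[of x] by (simp add: u0_def)
    also have "u0 x \<le> U x" unfolding U_def by (rule UU_ge)
    finally show ?thesis .
  qed
  define Ur where "Ur = (\<lambda>x. if U x < \<top> then enn2real (U x) else 1)"
  have [measurable]: "Ur \<in> borel_measurable M" unfolding Ur_def by measurable
  have Urpos: "0 < Ur x" for x
    using Upos[of x] by (auto simp: Ur_def enn2real_positive_iff)
  have UUr: "AE x in M. U x = ennreal (Ur x)"
    using Ufin by eventually_elim (simp add: Ur_def less_top)
  define W1 where "W1 = (\<lambda>x. v1 x * Ur x powr aa)"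
  define W2 where "W2 = (\<lambda>x. v2 x * Ur x powr cc)"
  have [measurable]: "W1 \<in> borel_measurable M" "W2 \<in> borel_measurable M"
    unfolding W1_def W2_def by measurable
  have W1pos: "x \<in> space M \<Longrightarrow> 0 < W1 x" for x
    using v1pos[of x] Urpos[of x] by (simp add: W1_def)
  have W2pos: "x \<in> space M \<Longrightarrow> 0 < W2 x" for x
    using v2pos[of x] Urpos[of x] by (simp add: W2_def)
  have fact: "W1 x * W2 x powr (1-p) = w x" if x: "x \<in> space M" for x
  proof -
    have w0: "0 < w x" by (rule wpos[OF x])
    have u0': "0 < Ur x" by (rule Urpos)
    have "W1 x * W2 x powr (1-p) = (w x powr (1/p) * w x powr (- 1/p * (1-p))) * (Ur x powr aa * Ur x powr (cc * (1-p)))"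
      unfolding W1_def W2_def v1_def v2_def using w0 u0' by (simp add: powr_mult powr_powr mult_ac)
    also have "w x powr (1/p) * w x powr (- 1/p * (1-p)) = w x powr (1/p + - 1/p * (1-p))"
      by (rule powr_add[symmetric])
    also have "1/p + - 1/p * (1-p) = 1" using p by (simp add: field_simps)
    also have "Ur x powr aa * Ur x powr (cc * (1-p)) = Ur x powr (aa + cc * (1-p))"
      by (rule powr_add[symmetric])
    also have "aa + cc * (1-p) = 0" by (simp add: aa_def algebra_simps)
    finally show ?thesis using w0 u0' by simp
  qed
  have A1gen: "AE x in M. E n (\<lambda>y. ennreal (v y * Ur y powr r)) x \<le> ennreal ((2*BB) powr r) * ennreal (v x * Ur x powr r)"
    if [measurable]: "v \<in> borel_measurable M" and vpos: "\<And>x. x \<in> space M \<Longrightarrow> 0 < v x" and r: "1 \<le> r"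
      and SS: "\<And>x. Sop v r U x \<le> Sf U x" for v r n
  proof -
    have bd: "AE x in M. Sop v r U x \<le> ennreal (2*BB) * U x"
      using Ubd by eventually_elim (rule order_trans[OF SS])
    have a: "AE x in M. E n (\<lambda>y. ennreal (v y) * ennpow (U y) r) x \<le> ennreal ((2*BB) powr r) * (ennreal (v x) * ennpow (U x) r)"
      by (rule Sop_A1[OF r _ _ vpos _ bd]) (use BB_pos in auto)
    have c: "AE x in M. ennreal (v x * Ur x powr r) = ennreal (v x) * ennpow (U x) r"
      using UUr AE_space
    proof eventually_elim
      case (elim x)
      then show ?case using vpos[of x] Urpos[of x] by (simp add: ennpow_ennreal ennreal_mult)
    qed
    have b: "AE x in M. E n (\<lambda>y. ennreal (v y * Ur y powr r)) x = E n (\<lambda>y. ennreal (v y) * ennpow (U y) r) x"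
      by (rule E_cong[OF c]) measurable
    from a b c show ?thesis by eventually_elim simp
  qed
  have SS1: "Sop v1 aa U x \<le> Sf U x" for x by (simp add: Sf_def)
  have SS2: "Sop v2 cc U x \<le> Sf U x" for x by (simp add: Sf_def)
  show ?thesis
  proof (rule that[of W1 W2])
    show "AE x in M. E n (\<lambda>y. ennreal (W1 y)) x \<le> ennreal ((2*BB) powr aa) * ennreal (W1 x)" for n
      unfolding W1_def by (rule A1gen[OF _ _ aa1 SS1]) (use v1pos in auto)
    show "AE x in M. E n (\<lambda>y. ennreal (W2 y)) x \<le> ennreal ((2*BB) powr cc) * ennreal (W2 x)" for n
      unfolding W2_def by (rule A1gen[OF _ _ cc1 SS2]) (use v2pos in auto)
  qed (use W1pos W2pos fact in auto)
qed

end

context filt begin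

lemma rescale_int:
  fixes W :: "'a \<Rightarrow> real" and \<theta> h :: "'a \<Rightarrow> real"
  assumes [measurable]: "W \<in> borel_measurable M" "h \<in> borel_measurable M" "\<theta> \<in> borel_measurable (F 0)"
    and Wpos: "\<And>x. x \<in> space M \<Longrightarrow> 0 < W x" and K: "0 \<le> K"
    and A1: "AE x in M. E 0 (\<lambda>y. ennreal (W y)) x \<le> ennreal K * ennreal (W x)"
    and th0: "\<And>x. 0 \<le> \<theta> x" and hint: "(\<integral>\<^sup>+x. ennreal (h x) \<partial>M) < \<top>" and h0: "\<And>x. 0 \<le> h x"
    and th: "\<And>x. \<theta> x \<le> h x / (1 + enn2real (E 0 (\<lambda>y. ennreal (W y)) x))"
  shows "integrable M (\<lambda>x. \<theta> x * W x)"
proof (rule integrableI_nonneg)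
  have [measurable]: "\<theta> \<in> borel_measurable M" by (rule meas_M[of _ 0]) simp
  show "(\<lambda>x. \<theta> x * W x) \<in> borel_measurable M" by measurable
  show "AE x in M. 0 \<le> \<theta> x * W x" using Wpos th0 by (intro AE_I2 mult_nonneg_nonneg) (auto intro: less_imp_le)
  have "(\<integral>\<^sup>+x. ennreal (\<theta> x * W x) \<partial>M) = (\<integral>\<^sup>+x. ennreal (\<theta> x) * ennreal (W x) \<partial>M)"
    using th0 Wpos by (intro nn_integral_cong) (simp add: ennreal_mult less_imp_le)
  also have "\<dots> = (\<integral>\<^sup>+x. ennreal (\<theta> x) * E 0 (\<lambda>y. ennreal (W y)) x \<partial>M)"
    by (rule E_intg[symmetric]) auto
  also have "\<dots> \<le> (\<integral>\<^sup>+x. ennreal (h x) \<partial>M)"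
  proof (rule nn_integral_mono_AE)
    show "AE x in M. ennreal (\<theta> x) * E 0 (\<lambda>y. ennreal (W y)) x \<le> ennreal (h x)"
      using A1 AE_space
    proof eventually_elim
      case (elim x)
      have "E 0 (\<lambda>y. ennreal (W y)) x < \<top>"
        using elim(1) by (rule le_less_trans) (simp add: ennreal_mult_less_top)
      then obtain e where e: "E 0 (\<lambda>y. ennreal (W y)) x = ennreal e" "0 \<le> e"
        by (metis ennreal_cases top.not_eq_extremum)
      have "\<theta> x * e \<le> h x / (1 + e) * e"
        using th[of x] e by (intro mult_right_mono) auto
      also have "\<dots> \<le> h x" using h0[of x] e by (simp add: field_simps mult_left_mono)
      finally show ?case using e th0[of x] by (simp add: ennreal_mult[symmetric] ennreal_leI del: ennreal_mult)
    qed
  qed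
  finally show "(\<integral>\<^sup>+x. ennreal (\<theta> x * W x) \<partial>M) < \<infinity>" using hint by simp
qed

lemma rescale:
  fixes W1 W2 :: "'a \<Rightarrow> real" and q K1 K2 :: real
  assumes [measurable]: "W1 \<in> borel_measurable M" "W2 \<in> borel_measurable M"
    and W1pos: "\<And>x. x \<in> space M \<Longrightarrow> 0 < W1 x" and W2pos: "\<And>x. x \<in> space M \<Longrightarrow> 0 < W2 x"
    and q: "0 < q" and K: "0 \<le> K1" "0 \<le> K2"
    and A1: "\<And>n. AE x in M. E n (\<lambda>y. ennreal (W1 y)) x \<le> ennreal K1 * ennreal (W1 x)"
            "\<And>n. AE x in M. E n (\<lambda>y. ennreal (W2 y)) x \<le> ennreal K2 * ennreal (W2 x)"
  obtains \<theta> :: "'a \<Rightarrow> real" where "\<theta> \<in> borel_measurable (F 0)" "\<And>x. 0 < \<theta> x"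
    "integrable M (\<lambda>x. \<theta> x powr q * W1 x)" "integrable M (\<lambda>x. \<theta> x * W2 x)"
proof -
  interpret S0: sigma_finite_subalgebra M "F 0" by (rule sfs)
  obtain h :: "'a \<Rightarrow> real" where hm: "h \<in> borel_measurable (restr_to_subalg M (F 0))"
    and hpos: "\<And>x. 0 < h x" and "\<And>x. h x \<le> 1" and hint: "integrable (restr_to_subalg M (F 0)) h"
    by (rule sigma_finite_measure.obtain_positive_integrable_function[OF S0.sigma_fin_subalg]) blast
  have [measurable]: "h \<in> borel_measurable (F 0)" using hm by (simp add: S0.subalg)
  have [measurable]: "h \<in> borel_measurable M" by (rule meas_M[of _ 0]) simp
  have hint': "(\<integral>\<^sup>+x. ennreal (h x) \<partial>M) < \<top>"
  proof -
    have "(\<integral>\<^sup>+x. ennreal (h x) \<partial>(restr_to_subalg M (F 0))) \<noteq> \<infinity>" using integrableD(2)[OF hint] .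
    then show ?thesis by (simp add: nn_integral_subalgebra2[OF S0.subalg] top.not_eq_extremum)
  qed
  define e1 where "e1 = (\<lambda>x. enn2real (E 0 (\<lambda>y. ennreal (W1 y)) x))"
  define e2 where "e2 = (\<lambda>x. enn2real (E 0 (\<lambda>y. ennreal (W2 y)) x))"
  have [measurable]: "e1 \<in> borel_measurable (F 0)" "e2 \<in> borel_measurable (F 0)"
    unfolding e1_def e2_def by measurable
  define \<theta> where "\<theta> = (\<lambda>x. min ((h x / (1 + e1 x)) powr (1/q)) (h x / (1 + e2 x)))"
  have thmeas[measurable]: "\<theta> \<in> borel_measurable (F 0)" unfolding \<theta>_def by measurable
  have e0: "0 \<le> e1 x" "0 \<le> e2 x" for x by (simp_all add: e1_def e2_def)
  have thpos: "0 < \<theta> x" for x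
    using hpos[of x] e0[of x] by (simp add: \<theta>_def add_nonneg_pos)
  show ?thesis
  proof (rule that[OF thmeas thpos])
    show "integrable M (\<lambda>x. \<theta> x * W2 x)"
      by (rule rescale_int[OF _ _ thmeas W2pos K(2) A1(2) _ hint']) (use thpos hpos in \<open>auto simp: \<theta>_def e2_def less_imp_le\<close>)
    show "integrable M (\<lambda>x. \<theta> x powr q * W1 x)"
    proof (rule rescale_int[OF _ _ _ W1pos K(1) A1(1) _ hint'])
      show "(\<lambda>x. \<theta> x powr q) \<in> borel_measurable (F 0)" by measurable
      fix x
      have "\<theta> x powr q \<le> ((h x / (1 + e1 x)) powr (1/q)) powr q"
        using thpos[of x] q by (intro powr_mono2) (auto simp: \<theta>_def)
      also have "\<dots> = h x / (1 + e1 x)"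
        using q hpos[of x] e0[of x] by (simp add: powr_powr)
      finally show "\<theta> x powr q \<le> h x / (1 + enn2real (E 0 (\<lambda>y. ennreal (W1 y)) x))" by (simp add: e1_def)
    qed (use hpos in \<open>auto intro: less_imp_le\<close>)
  qed
qed

end


lemma is_weight_const1: "is_weight M (\<lambda>_. 1)"
proof -
  have "esssup M (\<lambda>x. ennreal \<bar>1::real\<bar>) \<le> 1" by (intro esssup_I) auto
  then have e: "esssup M (\<lambda>x. ennreal \<bar>1::real\<bar>) < \<infinity>" by (simp add: le_less_trans)
  show ?thesis unfolding is_weight_def in_L1_plus_Linf_def
    by (intro conjI exI[of _ "\<lambda>_. 0::real"] exI[of _ "\<lambda>_. 1::real"]) (use e in auto)
qed

lemma is_weight_integrable:
  assumes "integrable M w" "\<And>x. x \<in> space M \<Longrightarrow> 0 < w x"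
  shows "is_weight M w"
proof -
  have "esssup M (\<lambda>x. ennreal \<bar>0::real\<bar>) \<le> 0" by (intro esssup_I) auto
  then have e: "esssup M (\<lambda>x. ennreal \<bar>0::real\<bar>) < \<infinity>" by simp
  show ?thesis unfolding is_weight_def in_L1_plus_Linf_def
    by (intro conjI exI[of _ w] exI[of _ "\<lambda>_. 0::real"]) (use e assms in auto)
qed

context filt begin

lemma A1_bound:
  assumes [measurable]: "W \<in> borel_measurable M" and Wpos: "\<And>x. x \<in> space M \<Longrightarrow> 0 < W x"
    and bd: "\<And>n. AE x in M. E n (\<lambda>y. ennreal (W y)) x \<le> ennreal K * ennreal (W x)"
  shows "A1_char M F W \<le> ennreal K"
  unfolding A1_char_def
proof (rule SUP_least)
  fix n
  show "esssup M (\<lambda>x. E n (\<lambda>y. ennreal (W y)) x / ennreal (W x)) \<le> ennreal K"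
  proof (rule esssup_I)
    show "AE x in M. E n (\<lambda>y. ennreal (W y)) x / ennreal (W x) \<le> ennreal K"
      using bd[of n] AE_space
    proof eventually_elim
      case (elim x)
      have w0: "0 < W x" using Wpos elim by simp
      have "E n (\<lambda>y. ennreal (W y)) x / ennreal (W x) \<le> (ennreal K * ennreal (W x)) / ennreal (W x)"
        by (rule divide_right_mono_ennreal) (rule elim(1))
      also have "\<dots> = ennreal K"
      proof -
        have "ennreal (W x) / ennreal (W x) = 1" using w0 by (intro ennreal_divide_self) auto
        then show ?thesis by (metis ennreal_times_divide mult_1_right)
      qed
      finally show ?case .
    qed
  qed measurable
qed

end

theorem theoremA1:
  fixes p :: real
  assumes "1 < p"
  shows "\<exists>C>0. \<forall>(M::'a measure) F w.
           mfiltration M F \<and> is_weight M w \<and> Ap_char M F p w < \<infinity> \<longrightarrow>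
           (\<exists>w1 w2. is_weight M w1 \<and> is_weight M w2 \<and>
              A1_char M F w1 < \<infinity> \<and> A1_char M F w2 < \<infinity> \<and>
              (AE x in M. w x = w1 x * w2 x powr (1 - p)) \<and>
              A1_char M F w1 \<le> ennreal C * Ap_char M F p w \<and>
              A1_char M F w2 \<le> ennreal C * ennpow (Ap_char M F p w) (1 / (p - 1)))"
proof -
  have p: "1 < p" by fact
  define C where "C = max (C1 p) (C2 p)"
  have Cpos: "0 < C" using C1_pos[OF p] by (simp add: C_def)
  show ?thesis
  proof (intro exI[of _ C] conjI allI impI Cpos)
    fix M :: "'a measure" and F w
    assume H: "mfiltration M F \<and> is_weight M w \<and> Ap_char M F p w < \<infinity>"
    interpret filt M F using H by unfold_locales simp
    have [measurable]: "w \<in> borel_measurable M" and wpos: "\<And>x. x \<in> space M \<Longrightarrow> 0 < w x"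
      using H by (auto simp: is_weight_def)
    have \<sigma>pos: "\<And>x. x \<in> space M \<Longrightarrow> 0 < w x powr (1/(1-p))"
      using wpos by (simp add: less_imp_neq[symmetric])
    have ApAE: "AE x in M. E n (\<lambda>y. ennreal (w y)) x * ennpow (E n (\<lambda>y. ennreal (w y powr (1/(1-p))))  x) (p-1) \<le> Ap_char M F p w" for n
    proof -
      have "AE x in M. E n (\<lambda>y. ennreal (w y)) x * ennpow (E n (\<lambda>y. ennreal (w y powr (1/(1-p))))  x) (p-1)
          \<le> esssup M (\<lambda>x. E n (\<lambda>y. ennreal (w y)) x * ennpow (E n (\<lambda>y. ennreal (w y powr (1/(1-p))))  x) (p-1))"
        by (rule esssup_AE)
      moreover have "esssup M (\<lambda>x. E n (\<lambda>y. ennreal (w y)) x * ennpow (E n (\<lambda>y. ennreal (w y powr (1/(1-p))))  x) (p-1))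
          \<le> Ap_char M F p w"
        unfolding Ap_char_def by (rule SUP_upper) simp
      ultimately show ?thesis by (auto elim: eventually_mono)
    qed
    obtain A where Aeq: "Ap_char M F p w = ennreal A" "0 \<le> A"
      using H by (metis ennreal_cases top.not_eq_extremum infinity_ennreal_def)
    show "\<exists>w1 w2. is_weight M w1 \<and> is_weight M w2 \<and>
              A1_char M F w1 < \<infinity> \<and> A1_char M F w2 < \<infinity> \<and>
              (AE x in M. w x = w1 x * w2 x powr (1 - p)) \<and>
              A1_char M F w1 \<le> ennreal C * Ap_char M F p w \<and>
              A1_char M F w2 \<le> ennreal C * ennpow (Ap_char M F p w) (1 / (p - 1))"
    proof (cases "A = 0")
      case True
      have "AE x in M. 0 < E 0 (\<lambda>y. ennreal (w y)) x" by (rule E_pos) (use wpos in auto)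
      moreover have "AE x in M. 0 < E 0 (\<lambda>y. ennreal (w y powr (1/(1-p)))) x" by (rule E_pos) (use \<sigma>pos in auto)
      ultimately have F: "AE x in M. False" using ApAE[of 0] unfolding Aeq True
        by eventually_elim (simp add: zero_less_iff_neq_zero)
      have A10: "A1_char M F (\<lambda>_. 1) \<le> ennreal 0"
        by (rule A1_bound) (use F in \<open>auto elim: eventually_mono\<close>)
      show ?thesis
        by (intro exI[of _ "\<lambda>_. 1"] conjI is_weight_const1) (use A10 F in \<open>auto elim: eventually_mono\<close>)
    next
      case False
      with Aeq have Apos: "0 < A" by simp
      interpret wsetup M F w p A
        by unfold_locales (use wpos p Apos ApAE Aeq in auto)
      obtain W1 W2 :: "'a \<Rightarrow> real" where W[measurable]: "W1 \<in> borel_measurable M" "W2 \<in> borel_measurable M"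
        and W1pos: "\<And>x. x \<in> space M \<Longrightarrow> 0 < W1 x" and W2pos: "\<And>x. x \<in> space M \<Longrightarrow> 0 < W2 x"
        and fact: "\<And>x. x \<in> space M \<Longrightarrow> W1 x * W2 x powr (1-p) = w x"
        and B1: "\<And>n. AE x in M. E n (\<lambda>y. ennreal (W1 y)) x \<le> ennreal ((2*BB) powr aa) * ennreal (W1 x)"
        and B2: "\<And>n. AE x in M. E n (\<lambda>y. ennreal (W2 y)) x \<le> ennreal ((2*BB) powr cc) * ennreal (W2 x)"
        by (rule pre_factor) blast
      obtain \<theta> :: "'a \<Rightarrow> real" where thm0[measurable]: "\<theta> \<in> borel_measurable (F 0)" and thpos: "\<And>x. 0 < \<theta> x"
        and int1: "integrable M (\<lambda>x. \<theta> x powr (p-1) * W1 x)" and int2: "integrable M (\<lambda>x. \<theta> x * W2 x)"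
        by (rule rescale[OF W W1pos W2pos _ _ _ B1 B2]) (use p in auto)
      define w1 where "w1 = (\<lambda>x. \<theta> x powr (p-1) * W1 x)"
      define w2 where "w2 = (\<lambda>x. \<theta> x * W2 x)"
      have thn: "\<theta> \<in> borel_measurable (F n)" for n by (rule meas_mono[OF thm0]) simp
      have thM[measurable]: "\<theta> \<in> borel_measurable M" by (rule meas_M[OF thm0])
      have w1pos: "x \<in> space M \<Longrightarrow> 0 < w1 x" for x using thpos[of x] W1pos[of x] by (simp add: w1_def)
      have w2pos: "x \<in> space M \<Longrightarrow> 0 < w2 x" for x using thpos[of x] W2pos[of x] by (simp add: w2_def)
      have [measurable]: "w1 \<in> borel_measurable M" "w2 \<in> borel_measurable M" unfolding w1_def w2_def by measurable
      have resc: "AE x in M. E n (\<lambda>y. ennreal (t y * W y)) x \<le> ennreal K * ennreal (t x * W x)"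
        if [measurable]: "t \<in> borel_measurable (F n)" "W \<in> borel_measurable M" and t0: "\<And>x. 0 \<le> t x"
          and Wp: "\<And>x. x \<in> space M \<Longrightarrow> 0 < W x"
          and bd: "AE x in M. E n (\<lambda>y. ennreal (W y)) x \<le> ennreal K * ennreal (W x)" and K: "0 \<le> K" for t W K n
      proof -
        have tM[measurable]: "t \<in> borel_measurable M" by (rule meas_M[of _ n]) simp
        have "AE x in M. ennreal (t x) * E n (\<lambda>y. ennreal (W y)) x = E n (\<lambda>y. ennreal (t y) * ennreal (W y)) x"
          by (rule E_prod) measurable
        moreover have "AE x in M. E n (\<lambda>y. ennreal (t y) * ennreal (W y)) x = E n (\<lambda>y. ennreal (t y * W y)) x"
          by (rule E_cong) (use t0 Wp in \<open>auto intro!: AE_I2 simp: ennreal_mult less_imp_le\<close>)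
        ultimately show ?thesis using bd AE_space
        proof eventually_elim
          case (elim x)
          have "E n (\<lambda>y. ennreal (t y * W y)) x = ennreal (t x) * E n (\<lambda>y. ennreal (W y)) x" using elim by simp
          also have "\<dots> \<le> ennreal (t x) * (ennreal K * ennreal (W x))" using elim by (intro mult_left_mono) auto
          also have "\<dots> = ennreal K * ennreal (t x * W x)"
            using t0[of x] Wp[of x] elim by (simp add: ennreal_mult less_imp_le mult_ac)
          finally show ?case .
        qed
      qed
      have K1: "A1_char M F w1 \<le> ennreal ((2*BB) powr aa)"
      proof (rule A1_bound)
        fix n
        show "AE x in M. E n (\<lambda>y. ennreal (w1 y)) x \<le> ennreal ((2*BB) powr aa) * ennreal (w1 x)"
          unfolding w1_def by (rule resc[OF _ _ _ W1pos B1]) (use thn in auto)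
      qed (use w1pos in auto)
      have K2: "A1_char M F w2 \<le> ennreal ((2*BB) powr cc)"
      proof (rule A1_bound)
        fix n
        show "AE x in M. E n (\<lambda>y. ennreal (w2 y)) x \<le> ennreal ((2*BB) powr cc) * ennreal (w2 x)"
          unfolding w2_def by (rule resc[OF _ _ _ W2pos B2]) (use thn thpos in \<open>auto intro: less_imp_le\<close>)
      qed (use w2pos in auto)
      have fac: "AE x in M. w x = w1 x * w2 x powr (1 - p)"
      proof (rule AE_I2)
        fix x assume x: "x \<in> space M"
        have t0: "0 < \<theta> x" by (rule thpos)
        have "w1 x * w2 x powr (1 - p) = (\<theta> x powr (p-1) * \<theta> x powr (1-p)) * (W1 x * W2 x powr (1-p))"
          unfolding w1_def w2_def by (simp add: powr_mult mult_ac)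
        also have "\<theta> x powr (p-1) * \<theta> x powr (1-p) = \<theta> x powr ((p-1) + (1-p))" by (rule powr_add[symmetric])
        also have "\<dots> = 1" using t0 by simp
        finally show "w x = w1 x * w2 x powr (1 - p)" using fact[OF x] by simp
      qed
      have c1: "ennreal ((2*BB) powr aa) \<le> ennreal C * Ap_char M F p w"
        unfolding Aeq(1) BB_aa using Apos C1_pos[OF p]
        by (simp add: ennreal_mult[symmetric] C_def mult_right_mono ennreal_leI del: ennreal_mult)
      have c2: "ennreal ((2*BB) powr cc) \<le> ennreal C * ennpow (Ap_char M F p w) (1 / (p - 1))"
        unfolding Aeq(1) BB_cc using Apos C2_pos[OF p]
        by (simp add: ennpow_ennreal ennreal_mult[symmetric] C_def mult_right_mono ennreal_leI del: ennreal_mult)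
      have iw1: "is_weight M w1" by (rule is_weight_integrable) (use int1 w1pos in \<open>simp_all add: w1_def\<close>)
      have iw2: "is_weight M w2" by (rule is_weight_integrable) (use int2 w2pos in \<open>simp_all add: w2_def\<close>)
      have f1: "A1_char M F w1 < \<infinity>" using K1 by (simp add: le_less_trans)
      have f2: "A1_char M F w2 < \<infinity>" using K2 by (simp add: le_less_trans)
      have b1: "A1_char M F w1 \<le> ennreal C * Ap_char M F p w" using K1 c1 by (rule order_trans)
      have b2: "A1_char M F w2 \<le> ennreal C * ennpow (Ap_char M F p w) (1 / (p - 1))" using K2 c2 by (rule order_trans)
      show ?thesis using iw1 iw2 f1 f2 b1 b2 fac by blast
    qed
  qed
qed

end
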